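(* There exists a function $\chi_{\ge1}\in C^\infty([0,\infty))$ such that $\chi_{\ge1}(x)=0$ for $x\le1$, $\chi_{\ge1}(x)=1$ for $x\ge2$, and $$\int_0^\infty\frac{\chi_{\ge1}(x)}{x^3}dx=\int_0^\infty x^3(1-\chi_{\ge1}(x))dx=\int_0^\infty x^3\log(x)(1-\chi_{\ge1}(x))dx=0.$$ Moreover, for any such function, for every $k\ge0$ there is $C_k>0$ (and there is $C>0$) such that the Hankel transform of order 1 of $x\mapsto\chi_{\ge1}(x)/x^5$ satisfies $$\Big|\widehat{\tfrac{\chi_{\ge1}(\cdot)}{(\cdot)^5}}(\eta)\Big|\le\begin{cases}C\eta^3\langle\log(\eta)\rangle, & \eta<1,\\ \dfrac{C_k}{\eta^k}, & \eta\ge1.\end{cases}$$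
   Context: The Hankel transform of order 1 is $\widehat f(\xi)=\int_0^\infty J_1(r\xi)f(r)\,r\,dr$, where $J_1$ is the Bessel function of order 1; $\langle x\rangle=\sqrt{1+x^2}$. *)

theory Defs
  imports "HOL-Analysis.Analysis"
begin

definition besselJ1 :: "real \<Rightarrow> real" where
  "besselJ1 x = (\<Sum>m. (-1) ^ m / (fact m * fact (m + 1)) * (x / 2) ^ (2 * m + 1))"

definition hankel1 :: "(real \<Rightarrow> real) \<Rightarrow> real \<Rightarrow> real" where
  "hankel1 f \<xi> = (LBINT r:{0<..}. besselJ1 (r * \<xi>) * f r * r)"

definition jbr :: "real \<Rightarrow> real" where
  "jbr x = sqrt (1 + x\<^sup>2)"

definition smooth_nonneg :: "(real \<Rightarrow> real) \<Rightarrow> bool" where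
  "smooth_nonneg f \<longleftrightarrow> (\<exists>D :: nat \<Rightarrow> real \<Rightarrow> real.
      (\<forall>x\<ge>0. D 0 x = f x) \<and>
      (\<forall>n. \<forall>x\<ge>0. (D n has_real_derivative D (Suc n) x) (at x within {0..})))"

definition good_cutoff :: "(real \<Rightarrow> real) \<Rightarrow> bool" where
  "good_cutoff chi \<longleftrightarrow> smooth_nonneg chi
     \<and> (\<forall>x. 0 \<le> x \<and> x \<le> 1 \<longrightarrow> chi x = 0)
     \<and> (\<forall>x\<ge>2. chi x = 1)
     \<and> set_integrable lborel {0<..} (\<lambda>x. chi x / x ^ 3)
     \<and> (LBINT x:{0<..}. chi x / x ^ 3) = 0
     \<and> set_integrable lborel {0<..} (\<lambda>x. x ^ 3 * (1 - chi x))
     \<and> (LBINT x:{0<..}. x ^ 3 * (1 - chi x)) = 0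
     \<and> set_integrable lborel {0<..} (\<lambda>x. x ^ 3 * ln x * (1 - chi x))
     \<and> (LBINT x:{0<..}. x ^ 3 * ln x * (1 - chi x)) = 0"

end

theory Submission
  imports Defs "HOL-Computational_Algebra.Polynomial"
begin


definition a1 :: "nat \<Rightarrow> real" where
  "a1 n = (if odd n then (-1)^(n div 2) / (fact (n div 2) * fact (Suc (n div 2)) * 2^n) else 0)"
definition a0 :: "nat \<Rightarrow> real" where
  "a0 n = (if even n then (-1)^(n div 2) / (fact (n div 2) ^ 2 * 2^n) else 0)"
definition J0 :: "real \<Rightarrow> real" where
  "J0 x = (\<Sum>n. a0 n * x^n)"

lemma fact_bound1: "fact (2*m+1) \<le> (fact m * fact (Suc m) * 2^(2*m+1) :: real)"
proof -
  have "fact m * fact (2*m+1 - m) * ((2*m+1) choose m) = (fact (2*m+1) :: nat)"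
    by (rule binomial_fact_lemma) simp
  moreover have "(2*m+1) - m = Suc m" by simp
  ultimately have e: "fact (2*m+1) = fact m * fact (Suc m) * ((2*m+1) choose m)" by simp
  have "((2*m+1) choose m) \<le> 2^(2*m+1)" by (rule binomial_le_pow2)
  then have "fact m * fact (Suc m) * ((2*m+1) choose m) \<le> (fact m * fact (Suc m) * 2^(2*m+1) :: nat)"
    by simp
  then have "real (fact (2*m+1)) \<le> real (fact m * fact (Suc m) * 2^(2*m+1))"
    using e by (metis of_nat_le_iff)
  then show ?thesis by (simp only: of_nat_mult of_nat_power of_nat_fact of_nat_numeral)
qed

lemma fact_bound0: "fact (2*m) \<le> (fact m ^ 2 * 2^(2*m) :: real)"
proof -
  have "fact m * fact (2*m - m) * ((2*m) choose m) = (fact (2*m) :: nat)"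
    by (rule binomial_fact_lemma) simp
  moreover have "(2*m) - m = m" by simp
  ultimately have e: "fact (2*m) = fact m * fact m * ((2*m) choose m)" by simp
  have "((2*m) choose m) \<le> 2^(2*m)" by (rule binomial_le_pow2)
  then have "fact m * fact m * ((2*m) choose m) \<le> (fact m * fact m * 2^(2*m) :: nat)"
    by simp
  then have "real (fact (2*m)) \<le> real (fact m * fact m * 2^(2*m))"
    using e by (metis of_nat_le_iff)
  then show ?thesis by (simp only: of_nat_mult of_nat_power of_nat_fact of_nat_numeral power2_eq_square)
qed

lemma a1_bound: "\<bar>a1 n\<bar> \<le> 1 / fact n"
proof (cases "odd n")
  case True
  then obtain m where n: "n = 2*m+1" by (metis oddE)
  have "n div 2 = m" using n by simp
  then have "\<bar>a1 n\<bar> = 1 / (fact m * fact (Suc m) * 2^(2*m+1))"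
    using n by (simp add: a1_def abs_mult)
  also have "\<dots> \<le> 1 / fact n" using fact_bound1[of m] n
    by (intro divide_left_mono) (auto intro!: mult_pos_pos)
  finally show ?thesis .
qed (simp add: a1_def)

lemma a0_bound: "\<bar>a0 n\<bar> \<le> 1 / fact n"
proof (cases "even n")
  case True
  then obtain m where n: "n = 2*m" by (metis evenE)
  have "n div 2 = m" using n by simp
  then have "\<bar>a0 n\<bar> = 1 / (fact m ^ 2 * 2^(2*m))"
    using n by (simp add: a0_def abs_mult)
  also have "\<dots> \<le> 1 / fact n" using fact_bound0[of m] n
    by (intro divide_left_mono) (auto intro!: mult_pos_pos)
  finally show ?thesis .
qed (simp add: a0_def)

lemma summable_fact_bound:
  assumes "\<And>n. \<bar>c n\<bar> \<le> 1 / fact n"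
  shows "summable (\<lambda>n. c n * (x::real)^n)"
proof (rule summable_comparison_test')
  show "summable (\<lambda>n. \<bar>x\<bar>^n / fact n)"
    using exp_converges[of "\<bar>x\<bar>"] by (simp add: sums_iff divide_inverse mult.commute)
  fix n
  have "norm (c n * x^n) = \<bar>c n\<bar> * \<bar>x\<bar>^n" by (simp add: abs_mult power_abs)
  also have "\<dots> \<le> (1 / fact n) * \<bar>x\<bar>^n" using assms[of n] by (intro mult_right_mono) auto
  finally show "norm (c n * x^n) \<le> \<bar>x\<bar>^n / fact n" by simp
qed

lemma summable_a1: "summable (\<lambda>n. a1 n * (x::real)^n)"
  by (rule summable_fact_bound[OF a1_bound])
lemma summable_a0: "summable (\<lambda>n. a0 n * (x::real)^n)"
  by (rule summable_fact_bound[OF a0_bound])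

lemma J1_eq: "besselJ1 x = (\<Sum>n. a1 n * x^n)"
proof -
  have sm: "strict_mono (\<lambda>m::nat. 2*m+1)" by (auto simp: strict_mono_def)
  have z: "a1 n * x^n = 0" if "n \<notin> range (\<lambda>m::nat. 2*m+1)" for n
  proof -
    have "\<not> odd n"
    proof
      assume "odd n"
      then obtain m where "n = 2*m+1" by (metis oddE)
      then show False using that by auto
    qed
    then show ?thesis by (simp add: a1_def)
  qed
  have "(\<lambda>m. a1 (2*m+1) * x^(2*m+1)) sums (\<Sum>n. a1 n * x^n)"
    using sums_mono_reindex[OF sm, of "\<lambda>n. a1 n * x^n", OF z] summable_sums[OF summable_a1[of x]]
    by simp
  moreover have "(\<lambda>m. a1 (2*m+1) * x^(2*m+1)) = (\<lambda>m. (-1) ^ m / (fact m * fact (m + 1)) * (x / 2) ^ (2 * m + 1))"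
    by (rule ext) (simp add: a1_def power_divide)
  ultimately show ?thesis unfolding besselJ1_def by (simp add: sums_iff)
qed

lemma alg1: "F > 0 \<Longrightarrow> P > 0 \<Longrightarrow> q > 0 \<Longrightarrow> (2*(q::real)) * (s / (F * (q * F) * (2*P))) = s / (F^2 * P)"
  by (simp add: field_simps power2_eq_square)
lemma alg2: "F > 0 \<Longrightarrow> P > 0 \<Longrightarrow> q > 0 \<Longrightarrow> (2*(q::real)) * (-s / ((q*F)^2 * (4*P))) = - (s / (F * (q * F) * (2*P)))"
  by (simp add: field_simps power2_eq_square)

lemma diffs_a0: "diffs a0 = (\<lambda>n. - a1 n)"
proof
  fix n
  show "diffs a0 n = - a1 n"
  proof (cases "odd n")
    case True
    then obtain m where n: "n = 2*m+1" by (metis oddE)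
    have d1: "Suc n div 2 = Suc m" using n by simp
    have d2: "n div 2 = m" using n by simp
    have "diffs a0 n = (2 * (real m + 1)) * (- ((-1)^m) / (((real m + 1) * fact m) ^ 2 * (4 * 2^(2*m))))"
      by (simp add: diffs_def a0_def n d1 power_add add.commute)
    also have "\<dots> = - ((-1)^m / (fact m * ((real m + 1) * fact m) * (2 * 2^(2*m))))"
      by (rule alg2) auto
    also have "\<dots> = - ((-1)^m / (fact m * fact (Suc m) * 2^(2*m+1)))" by simp
    finally show ?thesis using n by (simp add: a1_def d2)
  qed (auto simp: diffs_def a0_def a1_def)
qed

definition b1 :: "nat \<Rightarrow> real" where "b1 n = (if n = 0 then 0 else a1 (n - 1))"
definition c0 :: "nat \<Rightarrow> real" where "c0 n = (if n = 0 then 0 else a0 (n - 1))"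

lemma diffs_b1: "diffs b1 = c0"
proof
  fix n
  show "diffs b1 n = c0 n"
  proof (cases "odd n")
    case True
    then obtain m where n: "n = 2*m+1" by (metis oddE)
    have "diffs b1 n = (2 * (real m + 1)) * ((-1)^m / (fact m * ((real m + 1) * fact m) * (2 * 2^(2*m))))"
      by (simp add: diffs_def b1_def a1_def n add.commute)
    also have "\<dots> = (-1)^m / (fact m ^ 2 * 2^(2*m))"
      by (rule alg1) auto
    finally show ?thesis using n by (simp add: c0_def a0_def)
  next
    case False
    then show ?thesis by (cases n) (auto simp: diffs_def b1_def c0_def a0_def a1_def)
  qed
qed

lemma xJ1_series: "x * besselJ1 x = (\<Sum>n. b1 n * x^n)"
proof -
  have "(\<lambda>n. a1 n * x^n) sums besselJ1 x" using J1_eq summable_a1 by (simp add: sums_iff)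
  then have "(\<lambda>n. x * (a1 n * x^n)) sums (x * besselJ1 x)" by (rule sums_mult)
  then have "(\<lambda>n. b1 (Suc n) * x^(Suc n)) sums (x * besselJ1 x)"
    by (simp add: b1_def mult_ac)
  then have "(\<lambda>n. b1 n * x^n) sums (x * besselJ1 x + b1 0 * x^0)" by (subst (asm) sums_Suc_iff)
  then show ?thesis by (simp add: b1_def sums_iff)
qed

lemma xJ0_series: "x * J0 x = (\<Sum>n. c0 n * x^n)"
proof -
  have "(\<lambda>n. a0 n * x^n) sums J0 x" using summable_a0 unfolding J0_def by (simp add: sums_iff)
  then have "(\<lambda>n. x * (a0 n * x^n)) sums (x * J0 x)" by (rule sums_mult)
  then have "(\<lambda>n. c0 (Suc n) * x^(Suc n)) sums (x * J0 x)"
    by (simp add: c0_def mult_ac)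
  then have "(\<lambda>n. c0 n * x^n) sums (x * J0 x + c0 0 * x^0)" by (subst (asm) sums_Suc_iff)
  then show ?thesis by (simp add: c0_def sums_iff)
qed

lemma summable_b1: "summable (\<lambda>n. b1 n * (x::real)^n)"
proof -
  have "summable (\<lambda>n. x * (a1 n * x^n))" by (rule summable_mult[OF summable_a1])
  then have "summable (\<lambda>n. b1 (Suc n) * x^(Suc n))" by (simp add: b1_def mult_ac)
  then show ?thesis by (subst (asm) summable_Suc_iff)
qed

lemma J0_deriv: "(J0 has_real_derivative - besselJ1 x) (at x)"
proof -
  have "(J0 has_real_derivative (\<Sum>n. diffs a0 n * x^n)) (at x)"
    unfolding J0_def[abs_def] by (rule termdiffs_strong_converges_everywhere) (rule summable_a0)
  moreover have "(\<Sum>n. diffs a0 n * x^n) = - besselJ1 x"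
    by (simp add: diffs_a0 J1_eq suminf_minus[OF summable_a1, symmetric])
  ultimately show ?thesis by simp
qed

lemma J1_deriv_ex: "\<exists>d. (besselJ1 has_real_derivative d) (at x) \<and> besselJ1 x + x * d = x * J0 x"
proof -
  have D1: "(besselJ1 has_real_derivative (\<Sum>n. diffs a1 n * x^n)) (at x)"
    unfolding J1_eq[abs_def] by (rule termdiffs_strong_converges_everywhere) (rule summable_a1)
  have "((\<lambda>x. \<Sum>n. b1 n * x^n) has_real_derivative (\<Sum>n. diffs b1 n * x^n)) (at x)"
    by (rule termdiffs_strong_converges_everywhere) (rule summable_b1)
  then have D2: "((\<lambda>x. x * besselJ1 x) has_real_derivative x * J0 x) (at x)"
    by (simp add: xJ1_series[abs_def] diffs_b1 xJ0_series)
  have D3: "((\<lambda>x. x * besselJ1 x) has_real_derivative besselJ1 x + x * (\<Sum>n. diffs a1 n * x^n)) (at x)"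
    by (auto intro!: derivative_eq_intros D1)
  show ?thesis using DERIV_unique[OF D2 D3] D1 by auto
qed

lemma J1_0: "besselJ1 0 = 0"
  using powser_zero[of a1] by (simp add: J1_eq a1_def)
lemma J0_0: "J0 0 = 1"
  using powser_zero[of a0] by (simp add: J0_def a0_def)

lemma J1_cont: "isCont besselJ1 x"
  using J1_deriv_ex[of x] DERIV_isCont by blast
lemma J0_cont: "isCont J0 x"
  using J0_deriv[of x] DERIV_isCont by blast

lemma energy_le: assumes "x \<ge> 0" shows "J0 x ^ 2 + besselJ1 x ^ 2 \<le> 1"
proof -
  let ?E = "\<lambda>x. J0 x ^ 2 + besselJ1 x ^ 2"
  have "?E x \<le> ?E 0"
  proof (rule DERIV_nonpos_imp_decreasing_open[OF assms])
    fix t :: real assume t: "0 < t" "t < x"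
    obtain d where d: "(besselJ1 has_real_derivative d) (at t)" "besselJ1 t + t * d = t * J0 t"
      using J1_deriv_ex by blast
    have "(?E has_real_derivative (2 * J0 t * (- besselJ1 t) + 2 * besselJ1 t * d)) (at t)"
      using J0_deriv[of t] d(1) by (auto intro!: derivative_eq_intros)
    moreover have "2 * J0 t * (- besselJ1 t) + 2 * besselJ1 t * d \<le> 0"
    proof -
      have "t * (2 * J0 t * (- besselJ1 t) + 2 * besselJ1 t * d) = 2 * besselJ1 t * (t * d) - 2 * t * J0 t * besselJ1 t"
        by (simp add: algebra_simps)
      also have "t * d = t * J0 t - besselJ1 t" using d(2) by simp
      finally have "t * (2 * J0 t * (- besselJ1 t) + 2 * besselJ1 t * d) = - 2 * besselJ1 t ^ 2"
        by (simp add: algebra_simps power2_eq_square)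
      then have "t * (2 * J0 t * (- besselJ1 t) + 2 * besselJ1 t * d) \<le> 0" by simp
      then show ?thesis using t by (simp add: mult_le_0_iff)
    qed
    ultimately show "\<exists>y. (?E has_real_derivative y) (at t) \<and> y \<le> 0" by metis
  next
    show "continuous_on {0..x} ?E"
      by (intro continuous_at_imp_continuous_on ballI continuous_intros J0_cont J1_cont)
  qed
  then show ?thesis by (simp add: J0_0 J1_0)
qed


lemma J1_bound: "x \<ge> 0 \<Longrightarrow> \<bar>besselJ1 x\<bar> \<le> 1"
proof -
  assume "x \<ge> 0"
  then have "besselJ1 x ^ 2 \<le> 1" using energy_le[of x] zero_le_power2[of "J0 x"] by linarith
  then show ?thesis by (simp add: abs_square_le_1)
qed
lemma J0_bound: "x \<ge> 0 \<Longrightarrow> \<bar>J0 x\<bar> \<le> 1"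
proof -
  assume "x \<ge> 0"
  then have "J0 x ^ 2 \<le> 1" using energy_le[of x] zero_le_power2[of "besselJ1 x"] by linarith
  then show ?thesis by (simp add: abs_square_le_1)
qed

lemma J1_taylor: assumes "\<bar>x\<bar> \<le> 1" shows "\<bar>besselJ1 x - x/2\<bar> \<le> exp 1 * \<bar>x\<bar>^3"
proof -
  let ?f = "\<lambda>n. a1 n * x^n"
  have "?f sums besselJ1 x" using J1_eq summable_a1 by (simp add: sums_iff)
  then have s: "(\<lambda>i. ?f (i+3)) sums (besselJ1 x - (\<Sum>i<3. ?f i))"
    by (subst sums_iff_shift) simp
  have e3: "(\<Sum>i<3. ?f i) = x/2" by (simp add: eval_nat_numeral a1_def)
  have s2: "(\<lambda>i. ?f (i+3)) sums (besselJ1 x - x/2)" using s unfolding e3 .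
  have bnd: "\<bar>?f (i+3)\<bar> \<le> \<bar>x\<bar>^3 * (1 / fact i)" for i
  proof -
    have "\<bar>?f (i+3)\<bar> = \<bar>a1 (i+3)\<bar> * (\<bar>x\<bar>^i * \<bar>x\<bar>^3)" by (simp add: abs_mult power_abs power_add)
    also have "\<dots> \<le> (1 / fact (i+3)) * (1 * \<bar>x\<bar>^3)"
      using a1_bound assms by (intro mult_mono) (auto simp: power_le_one)
    also have "\<dots> \<le> (1 / fact i) * (1 * \<bar>x\<bar>^3)"
      by (intro mult_right_mono divide_left_mono) (auto simp: fact_mono)
    finally show ?thesis by simp
  qed
  have e: "(\<lambda>i. \<bar>x\<bar>^3 * (1 / fact i)) sums (\<bar>x\<bar>^3 * exp 1)"
    using exp_converges[of "1::real"] by (intro sums_mult) (simp add: divide_inverse)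
  have sa: "summable (\<lambda>i. \<bar>?f (i+3)\<bar>)"
    by (rule summable_comparison_test'[OF sums_summable[OF e]]) (use bnd in auto)
  have "\<bar>besselJ1 x - x/2\<bar> = \<bar>\<Sum>i. ?f (i+3)\<bar>" using s2 by (simp add: sums_iff)
  also have "\<dots> \<le> (\<Sum>i. \<bar>?f (i+3)\<bar>)"
    by (rule summable_rabs[OF sa])
  also have "\<dots> \<le> (\<Sum>i. \<bar>x\<bar>^3 * (1 / fact i))"
    by (rule suminf_le[OF bnd sa sums_summable[OF e]])
  also have "\<dots> = exp 1 * \<bar>x\<bar>^3" using e by (simp add: sums_iff mult.commute)
  finally show ?thesis .
qed

lemma J1_remainder:
  assumes "x \<ge> 0"
  shows "\<bar>besselJ1 x - x/2\<bar> \<le> (2 * exp 1 + 3) * (x^3 / (1 + x^2))"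
proof (cases "x \<le> 1")
  case True
  have "\<bar>besselJ1 x - x/2\<bar> \<le> exp 1 * x^3" using J1_taylor[of x] True assms by simp
  also have "\<dots> \<le> (2 * exp 1 + 3) * (x^3 / (1 + x^2))"
  proof -
    have "x^2 \<le> 1" using True assms by (simp add: power_le_one)
    then have "x^3 * x^2 \<le> x^3 * 1" using assms by (intro mult_left_mono) auto
    then have "x^3 * (1 + x^2) \<le> 2 * x^3" by (simp add: algebra_simps)
    then have "x^3 \<le> (2 * x^3) / (1+x^2)" by (simp add: le_divide_eq add_pos_nonneg)
    then have "x^3 \<le> 2 * (x^3 / (1+x^2))" by simp
    then have "exp 1 * x^3 \<le> exp 1 * (2 * (x^3 / (1+x^2)))" by (rule mult_left_mono) simp
    also have "\<dots> = (2 * exp 1) * (x^3 / (1 + x^2))" by simp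
    also have "\<dots> \<le> (2 * exp 1 + 3) * (x^3 / (1 + x^2))" using assms by (intro mult_right_mono) auto
    finally show ?thesis .
  qed
  finally show ?thesis .
next
  case False
  have "\<bar>besselJ1 x - x/2\<bar> \<le> 1 + x/2" using J1_bound[OF assms] assms by simp
  also have "\<dots> \<le> 3 * (x^3 / (1 + x^2))"
  proof -
    have x1: "1 \<le> x" using False by simp
    have "1 \<le> x^3" using x1 by (simp add: one_le_power)
    moreover have "x^1 \<le> x^3" using x1 by (intro power_increasing) auto
    moreover have "x^2 \<le> x^3" using x1 by (intro power_increasing) auto
    moreover have "(1 + x/2) * (1 + x^2) = 1 + x/2 + x^2 + x^3/2"
      by (simp add: algebra_simps power2_eq_square power3_eq_cube)
    ultimately have "(1 + x/2) * (1 + x^2) \<le> 3 * x^3" by simp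
    then show ?thesis by (simp add: le_divide_eq add_pos_nonneg)
  qed
  also have "\<dots> \<le> (2 * exp 1 + 3) * (x^3 / (1 + x^2))" using assms by (intro mult_right_mono) auto
  finally show ?thesis .
qed


lemma J1_deriv: "x \<noteq> 0 \<Longrightarrow> (besselJ1 has_real_derivative (J0 x - besselJ1 x / x)) (at x)"
proof -
  assume x: "x \<noteq> 0"
  obtain d where d: "(besselJ1 has_real_derivative d) (at x)" "besselJ1 x + x * d = x * J0 x"
    using J1_deriv_ex by blast
  have "d = J0 x - besselJ1 x / x" using d(2) x by (simp add: field_simps)
  then show ?thesis using d(1) by simp
qed

lemma int_over_1: "set_integrable lborel {1<..} (\<lambda>r::real. B / r^2)"
proof -
  have "set_integrable lborel (einterval (ereal 1) \<infinity>) (\<lambda>r::real. \<bar>B\<bar> / r^2)"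
  proof (rule interval_integral_FTC_nonneg(1)[where F="\<lambda>r. - \<bar>B\<bar> / r" and A="- \<bar>B\<bar>" and B=0])
    show "ereal 1 < \<infinity>" by simp
    fix x assume x: "ereal 1 < ereal x" "ereal x < \<infinity>"
    then have "x > 0" by simp
    then show "((\<lambda>r. - \<bar>B\<bar> / r) has_real_derivative \<bar>B\<bar> / x^2) (at x)"
      by (auto intro!: derivative_eq_intros simp: power2_eq_square field_simps)
    show "isCont (\<lambda>r. \<bar>B\<bar> / r^2) x" using \<open>x>0\<close> by (intro continuous_intros) auto
  next
    show "AE x in lborel. ereal 1 < ereal x \<longrightarrow> ereal x < \<infinity> \<longrightarrow> 0 \<le> \<bar>B\<bar> / x^2" by auto
    have "((\<lambda>r. - \<bar>B\<bar> / r) \<longlongrightarrow> - \<bar>B\<bar> / 1) (at_right 1)"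
      by (intro tendsto_intros) auto
    then show "(((\<lambda>r. - \<bar>B\<bar> / r) \<circ> real_of_ereal) \<longlongrightarrow> - \<bar>B\<bar>) (at_right (ereal 1))"
      by (simp add: ereal_tendsto_simps1)
    have "((\<lambda>r. - \<bar>B\<bar> / r) \<longlongrightarrow> 0) at_top"
      by (intro tendsto_divide_0[OF tendsto_const] filterlim_at_top_imp_at_infinity[OF filterlim_ident])
    then show "(((\<lambda>r. - \<bar>B\<bar> / r) \<circ> real_of_ereal) \<longlongrightarrow> 0) (at_left \<infinity>)"
      by (simp add: ereal_tendsto_simps1)
  qed
  then have "set_integrable lborel {1<..} (\<lambda>r::real. \<bar>B\<bar> / r^2)" by simp
  then have "set_integrable lborel {1<..} (\<lambda>r::real. sgn B * (\<bar>B\<bar> / r^2))"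
    by (rule set_integrable_mult_right)
  moreover have "(\<lambda>r::real. sgn B * (\<bar>B\<bar> / r^2)) = (\<lambda>r. B / r^2)"
    by (rule ext) (simp add: mult_sgn_abs)
  ultimately show ?thesis by simp
qed

lemma int_lemma:
  fixes f :: "real \<Rightarrow> real"
  assumes cont: "continuous_on {0<..} f" and z: "\<And>r. 0<r \<Longrightarrow> r<1 \<Longrightarrow> f r = 0"
    and b: "\<And>r. r \<ge> 1 \<Longrightarrow> \<bar>f r\<bar> \<le> C / r^2"
  shows "set_integrable lborel {0<..} f"
proof -
  have i: "integrable lborel (\<lambda>x. indicator {1<..} x *\<^sub>R (C / x^2))"
    using int_over_1[of C] unfolding set_integrable_def .
  have m: "(\<lambda>x. indicator {0<..} x *\<^sub>R f x) \<in> borel_measurable lborel"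
    using borel_measurable_continuous_on_indicator[OF _ cont] by simp
  show ?thesis unfolding set_integrable_def
  proof (rule Bochner_Integration.integrable_bound[OF i m])
    show "AE x in lborel. norm (indicator {0<..} x *\<^sub>R f x) \<le> norm (indicator {1<..} x *\<^sub>R (C / x^2))"
      using AE_lborel_singleton[of "1::real"]
    proof eventually_elim
      case (elim x)
      show ?case
      proof (cases "x > 1")
        case True
        then have "\<bar>f x\<bar> \<le> C / x^2" using b by simp
        moreover have "C / x^2 \<le> \<bar>C\<bar> / x^2" by (intro divide_right_mono) auto
        ultimately show ?thesis using True by (simp add: indicator_def)
      next
        case False
        then have "x \<le> 0 \<or> (0 < x \<and> x < 1)" using elim by auto
        then show ?thesis using z by (auto simp: indicator_def)
      qed
    qed
  qed
qed

lemma cont_bound: "continuous_on {a..b} (f::real\<Rightarrow>real) \<Longrightarrow> \<exists>B\<ge>0. \<forall>x\<in>{a..b}. \<bar>f x\<bar> \<le> B"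
proof -
  assume c: "continuous_on {a..b} f"
  have "compact (f ` {a..b})" by (rule compact_continuous_image[OF c compact_Icc])
  then obtain B where "\<forall>y\<in>f ` {a..b}. norm y \<le> B" using compact_imp_bounded bounded_iff by metis
  then show ?thesis by (intro exI[of _ "max B 0"]) auto
qed

lemma set_integral_shrink:
  assumes "B \<subseteq> A" "\<And>x. x \<in> A - B \<Longrightarrow> f x = 0"
  shows "set_lebesgue_integral M A f = set_lebesgue_integral M B f"
    and "set_integrable M A f \<longleftrightarrow> set_integrable M B f"
proof -
  have e: "(\<lambda>x. indicator A x *\<^sub>R f x) = (\<lambda>x. indicator B x *\<^sub>R f x)"
    using assms by (auto simp: indicator_def fun_eq_iff)
  show "set_lebesgue_integral M A f = set_lebesgue_integral M B f"
    unfolding set_lebesgue_integral_def e ..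
  show "set_integrable M A f \<longleftrightarrow> set_integrable M B f"
    unfolding set_integrable_def e ..
qed

lemma deriv_zero_on_open:
  assumes "open S" "x \<in> S" "\<And>y. y \<in> S \<Longrightarrow> f y = c" "(f has_real_derivative d) (at x)"
  shows "d = 0"
proof -
  have "((\<lambda>y. c) has_real_derivative 0) (at x)" by simp
  then have "(f has_real_derivative 0) (at x)"
    by (rule has_field_derivative_transform_within_open[OF _ assms(1,2)]) (use assms(3) in auto)
  then show ?thesis using DERIV_unique assms(4) by blast
qed

lemma poly_inv_deriv:
  assumes "r \<noteq> 0"
  shows "((\<lambda>r. poly p (inverse r)) has_real_derivative - poly (pCons 0 (pCons 0 (pderiv p))) (inverse r)) (at r)"
proof -
  have "((\<lambda>r. poly p (inverse r)) has_real_derivative poly (pderiv p) (inverse r) * (- (inverse r ^ Suc (Suc 0)))) (at r)"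
    by (rule DERIV_chain2[OF poly_DERIV DERIV_inverse[OF assms]])
  then show ?thesis by (simp add: power2_eq_square mult_ac)
qed

locale cutoff =
  fixes chi :: "real \<Rightarrow> real" and D :: "nat \<Rightarrow> real \<Rightarrow> real"
  assumes D0: "\<And>x. x \<ge> 0 \<Longrightarrow> D 0 x = chi x"
  and DD: "\<And>n x. x \<ge> 0 \<Longrightarrow> (D n has_real_derivative D (Suc n) x) (at x within {0..})"
  and chi0: "\<And>x. 0 \<le> x \<Longrightarrow> x \<le> 1 \<Longrightarrow> chi x = 0"
  and chi1: "\<And>x. x \<ge> 2 \<Longrightarrow> chi x = 1"
begin

lemma Dat: "r > 0 \<Longrightarrow> (D n has_real_derivative D (Suc n) r) (at r)"
proof -
  assume r: "r > 0"
  have "r \<in> interior {0..}" using r by simp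
  then have "at r within {0..} = at r" by (rule at_within_interior)
  then show ?thesis using DD[of r n] r by simp
qed

lemma Dcont: "r > 0 \<Longrightarrow> isCont (D n) r"
  using Dat DERIV_isCont by blast

lemma Dzero: "0 < r \<Longrightarrow> r < 1 \<Longrightarrow> D n r = 0"
proof (induction n arbitrary: r)
  case 0
  then show ?case using D0 chi0 by simp
next
  case (Suc n)
  show ?case
    by (rule deriv_zero_on_open[of "{0<..<1}" r "D n" 0]) (use Suc Dat in auto)
qed

lemma Dbig: "r > 2 \<Longrightarrow> D 0 r = 1 \<and> D (Suc n) r = 0"
proof (induction n arbitrary: r)
  case 0
  have "D 1 r = 0"
    by (rule deriv_zero_on_open[of "{2<..}" r "D 0" 1]) (use 0 Dat D0 chi1 in auto)
  then show ?case using 0 D0 chi1 by simp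
next
  case (Suc n)
  have "D (Suc (Suc n)) r = 0"
    by (rule deriv_zero_on_open[of "{2<..}" r "D (Suc n)" 0]) (use Suc Dat in auto)
  then show ?case using Suc by simp
qed

definition FK :: "nat \<Rightarrow> (nat \<Rightarrow> real poly) \<Rightarrow> real \<Rightarrow> real" where
  "FK N ps r = (\<Sum>j<N. D j r * poly (ps j) (inverse r))"

definition dps :: "nat \<Rightarrow> (nat \<Rightarrow> real poly) \<Rightarrow> nat \<Rightarrow> real poly" where
  "dps N ps j = (case j of 0 \<Rightarrow> 0 | Suc i \<Rightarrow> ps i) - (if j < N then pCons 0 (pCons 0 (pderiv (ps j))) else 0)"

lemma FK_deriv:
  assumes r: "r > 0"
  shows "(FK N ps has_real_derivative FK (Suc N) (dps N ps) r) (at r)"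
proof -
  let ?y = "inverse r"
  have "((\<lambda>r. \<Sum>j<N. D j r * poly (ps j) (inverse r)) has_real_derivative
     (\<Sum>j<N. D (Suc j) r * poly (ps j) ?y + D j r * (- poly (pCons 0 (pCons 0 (pderiv (ps j)))) ?y))) (at r)"
  proof (intro DERIV_sum)
    fix j
    show "((\<lambda>r. D j r * poly (ps j) (inverse r)) has_real_derivative
       (D (Suc j) r * poly (ps j) ?y + D j r * (- poly (pCons 0 (pCons 0 (pderiv (ps j)))) ?y))) (at r)"
      by (rule DERIV_cong[OF DERIV_mult[OF Dat[OF r] poly_inv_deriv[of r "ps j"]]]) (use r in auto)
  qed
  moreover have "(\<Sum>j<N. D (Suc j) r * poly (ps j) ?y + D j r * (- poly (pCons 0 (pCons 0 (pderiv (ps j)))) ?y))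
      = FK (Suc N) (dps N ps) r"
  proof -
    have "FK (Suc N) (dps N ps) r = (\<Sum>j<Suc N. D j r * poly (case j of 0 \<Rightarrow> 0 | Suc i \<Rightarrow> ps i) ?y)
       - (\<Sum>j<Suc N. D j r * (if j < N then poly (pCons 0 (pCons 0 (pderiv (ps j)))) ?y else 0))"
      unfolding FK_def dps_def by (simp add: sum_subtractf algebra_simps if_distrib cong: if_cong)
    also have "(\<Sum>j<Suc N. D j r * poly (case j of 0 \<Rightarrow> 0 | Suc i \<Rightarrow> ps i) ?y) = (\<Sum>j<N. D (Suc j) r * poly (ps j) ?y)"
      by (subst sum.lessThan_Suc_shift) simp
    also have "(\<Sum>j<Suc N. D j r * (if j < N then poly (pCons 0 (pCons 0 (pderiv (ps j)))) ?y else 0))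
        = (\<Sum>j<N. D j r * poly (pCons 0 (pCons 0 (pderiv (ps j)))) ?y)"
      by simp
    finally show ?thesis by (simp add: sum_subtractf)
  qed
  ultimately show ?thesis unfolding FK_def[abs_def] by simp
qed

lemma FK_cont: "r > 0 \<Longrightarrow> isCont (FK N ps) r"
  using FK_deriv DERIV_isCont by blast

lemma FK_cont_on: "continuous_on {0<..} (FK N ps)"
  by (intro continuous_at_imp_continuous_on ballI FK_cont) auto

lemma FK_zero: "0 < r \<Longrightarrow> r < 1 \<Longrightarrow> FK N ps r = 0"
  unfolding FK_def using Dzero by simp

lemma FK_big: "r > 2 \<Longrightarrow> FK N ps r = (if N = 0 then 0 else poly (ps 0) (inverse r))"
proof (cases N)
  case (Suc M)
  assume r: "r > 2"
  have "FK N ps r = D 0 r * poly (ps 0) (inverse r) + (\<Sum>j<M. D (Suc j) r * poly (ps (Suc j)) (inverse r))"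
    unfolding FK_def Suc by (subst sum.lessThan_Suc_shift) simp
  then show ?thesis using Dbig[OF r] Suc by simp
qed (simp add: FK_def)

definition invp :: "(nat \<Rightarrow> real poly) \<Rightarrow> bool" where
  "invp ps \<longleftrightarrow> coeff (ps 0) 0 = 0 \<and> coeff (ps 0) 1 = 0"

lemma invp_dps: "invp (dps N ps)"
  by (simp add: invp_def dps_def)

lemma FK_bound:
  assumes "invp ps"
  shows "\<exists>C. \<forall>r\<ge>1. \<bar>FK N ps r\<bar> \<le> C / r^2"
proof -
  obtain B where B: "B \<ge> 0" "\<forall>x\<in>{1..2}. \<bar>FK N ps x\<bar> \<le> B"
    using cont_bound[of 1 2 "FK N ps"] continuous_on_subset[OF FK_cont_on, of "{1..2}"] by force
  obtain a p' where p': "ps 0 = pCons a p'" by (cases "ps 0") auto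
  obtain b q where q: "p' = pCons b q" by (cases p') auto
  have "a = 0" "b = 0" using assms p' q by (auto simp: invp_def)
  then have ps0: "ps 0 = pCons 0 (pCons 0 q)" using p' q by simp
  obtain B' where B': "B' \<ge> 0" "\<forall>x\<in>{0..1}. \<bar>poly q x\<bar> \<le> B'"
    using cont_bound[of 0 1 "poly q"] by (force intro: continuous_intros)
  show ?thesis
  proof (intro exI[of _ "4 * B + B'"] allI impI)
    fix r :: real assume r: "r \<ge> 1"
    show "\<bar>FK N ps r\<bar> \<le> (4 * B + B') / r^2"
    proof (cases "r \<le> 2")
      case True
      then have "\<bar>FK N ps r\<bar> \<le> B" using B r by auto
      also have "B \<le> 4 * B / r^2"
      proof -
        have "r^2 \<le> 2^2" using True r by (intro power_mono) auto
        then have "B * r^2 \<le> B * 4" using B(1) by (intro mult_left_mono) auto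
        then have "B * r^2 \<le> 4 * B" by simp
        then show ?thesis using r by (simp add: le_divide_eq)
      qed
      also have "\<dots> \<le> (4 * B + B') / r^2" using B' r by (intro divide_right_mono) auto
      finally show ?thesis .
    next
      case False
      have "\<bar>FK N ps r\<bar> \<le> \<bar>poly (ps 0) (inverse r)\<bar>" using FK_big[of r N ps] False by simp
      also have "\<dots> = inverse r ^ 2 * \<bar>poly q (inverse r)\<bar>"
        using r by (simp add: ps0 abs_mult power2_eq_square)
      also have "\<dots> \<le> inverse r ^ 2 * B'"
        using B' r by (intro mult_left_mono) (auto simp: inverse_le_1_iff)
      also have "\<dots> = B' / r^2" by (simp add: field_simps)
      also have "\<dots> \<le> (4 * B + B') / r^2" using B r by (intro divide_right_mono) auto
      finally show ?thesis .
    qed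
  qed
qed

lemma FK_tendsto:
  assumes "invp ps"
  shows "(FK N ps \<longlongrightarrow> 0) at_top"
proof -
  obtain C where C: "\<forall>r\<ge>1. \<bar>FK N ps r\<bar> \<le> C / r^2" using FK_bound[OF assms] by blast
  show ?thesis
  proof (rule Lim_null_comparison)
    show "\<forall>\<^sub>F x in at_top. norm (FK N ps x) \<le> C / x^2"
      using C by (auto simp: eventually_at_top_linorder intro!: exI[of _ 1])
    show "((\<lambda>x. C / x^2) \<longlongrightarrow> 0) at_top"
      by (rule tendsto_divide_0[OF tendsto_const], rule filterlim_at_top_imp_at_infinity, rule filterlim_pow_at_top, simp, rule filterlim_ident)
  qed
qed

lemma FK_int:
  assumes "invp ps" "continuous_on {0<..} phi" "\<And>r. r > 0 \<Longrightarrow> \<bar>phi r\<bar> \<le> 1"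
  shows "set_integrable lborel {0<..} (\<lambda>r. phi r * FK N ps r)"
proof -
  obtain C where C: "\<forall>r\<ge>1. \<bar>FK N ps r\<bar> \<le> C / r^2" using FK_bound[OF assms(1)] by blast
  show ?thesis
  proof (rule int_lemma)
    show "continuous_on {0<..} (\<lambda>r. phi r * FK N ps r)"
      by (intro continuous_intros assms FK_cont_on)
    show "\<And>r. 0 < r \<Longrightarrow> r < 1 \<Longrightarrow> phi r * FK N ps r = 0" using FK_zero by simp
    fix r :: real assume r: "r \<ge> 1"
    have "\<bar>phi r * FK N ps r\<bar> \<le> 1 * \<bar>FK N ps r\<bar>"
      unfolding abs_mult using assms(3) r by (intro mult_right_mono) auto
    moreover have "\<bar>FK N ps r\<bar> \<le> C / r^2" using C r by auto
    ultimately show "\<bar>phi r * FK N ps r\<bar> \<le> C / r^2" by linarith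
  qed
qed

end


lemma set_cong_int:
  assumes "\<And>x. x \<in> A \<Longrightarrow> f x = g x"
  shows "set_lebesgue_integral M A f = set_lebesgue_integral M A g"
    and "set_integrable M A f \<longleftrightarrow> set_integrable M A g"
proof -
  have e: "(\<lambda>x. indicator A x *\<^sub>R f x) = (\<lambda>x. indicator A x *\<^sub>R g x)"
    using assms by (auto simp: indicator_def fun_eq_iff)
  show "set_lebesgue_integral M A f = set_lebesgue_integral M A g"
    unfolding set_lebesgue_integral_def e ..
  show "set_integrable M A f \<longleftrightarrow> set_integrable M A g"
    unfolding set_integrable_def e ..
qed

lemma J1c_cont: "isCont (\<lambda>r. besselJ1 (r * e)) x"
  by (rule continuous_at_compose[OF _ J1_cont, unfolded o_def]) (intro continuous_intros)
lemma J0c_cont: "isCont (\<lambda>r. J0 (r * e)) x"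
  by (rule continuous_at_compose[OF _ J0_cont, unfolded o_def]) (intro continuous_intros)

context cutoff
begin

definition Tps :: "nat \<Rightarrow> (nat \<Rightarrow> real poly) \<Rightarrow> nat \<Rightarrow> real poly" where
  "Tps N ps j = dps (Suc N) (dps N ps) j - (if j < Suc N then pCons 0 (dps N ps j) else 0)"

lemma FK_T:
  assumes "r > 0"
  shows "FK (Suc (Suc N)) (Tps N ps) r = FK (Suc (Suc N)) (dps (Suc N) (dps N ps)) r - FK (Suc N) (dps N ps) r / r"
proof -
  have "FK (Suc (Suc N)) (Tps N ps) r = FK (Suc (Suc N)) (dps (Suc N) (dps N ps)) r
     - (\<Sum>j<Suc (Suc N). D j r * (if j < Suc N then inverse r * poly (dps N ps j) (inverse r) else 0))"
    unfolding FK_def Tps_def by (simp add: sum_subtractf algebra_simps if_distrib cong: if_cong)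
  also have "(\<Sum>j<Suc (Suc N). D j r * (if j < Suc N then inverse r * poly (dps N ps j) (inverse r) else 0))
      = inverse r * FK (Suc N) (dps N ps) r"
    unfolding FK_def by (subst sum.lessThan_Suc) (simp add: sum_distrib_left mult_ac distrib_left)
  finally show ?thesis by (simp add: divide_inverse mult.commute)
qed

lemma invp_T: "invp (Tps N ps)"
  using invp_dps[of "Suc N" "dps N ps"] invp_dps[of N ps]
  by (simp add: invp_def Tps_def coeff_pCons)

lemma IBP:
  assumes inv: "invp ps" and eta: "\<eta> > 0"
  shows "(LBINT r:{0<..}. besselJ1 (r * \<eta>) * FK N ps r)
       = - (1 / \<eta>^2) * (LBINT r:{0<..}. besselJ1 (r * \<eta>) * FK (Suc (Suc N)) (Tps N ps) r)"
proof -
  define G where "G = FK N ps"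
  define G1 where "G1 = FK (Suc N) (dps N ps)"
  define G2 where "G2 = FK (Suc (Suc N)) (dps (Suc N) (dps N ps))"
  define TG where "TG = FK (Suc (Suc N)) (Tps N ps)"
  define phi where "phi r = besselJ1 (r * \<eta>)" for r
  define psi where "psi r = J0 (r * \<eta>)" for r
  have cphi: "continuous_on {0<..} phi" unfolding phi_def
    by (intro continuous_at_imp_continuous_on ballI J1c_cont)
  have bphi: "\<And>r. r > 0 \<Longrightarrow> \<bar>phi r\<bar> \<le> 1" unfolding phi_def using eta by (intro J1_bound) simp
  have bpsi: "\<And>r. r > 0 \<Longrightarrow> \<bar>psi r\<bar> \<le> 1" unfolding psi_def using eta by (intro J0_bound) simp
  have i1: "set_integrable lborel {0<..} (\<lambda>r. phi r * TG r)"
    unfolding TG_def by (rule FK_int[OF invp_T cphi bphi])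
  have i2: "set_integrable lborel {0<..} (\<lambda>r. phi r * G r)"
    unfolding G_def by (rule FK_int[OF inv cphi bphi])
  define F where "F r = phi r * G1 r - \<eta> * (psi r * G r)" for r
  define f where "f r = phi r * TG r + \<eta>^2 * (phi r * G r)" for r
  have fi: "set_integrable lborel {0<..} f"
    unfolding f_def by (intro set_integral_add(1) i1 set_integrable_mult_right i2)
  have "(LBINT x=ereal 0..\<infinity>. f x) = 0 - 0"
  proof (rule interval_integral_FTC_integrable[where F=F])
    show "ereal 0 < \<infinity>" by simp
    fix x assume "ereal 0 < ereal x" "ereal x < \<infinity>"
    then have x: "x > 0" by simp
    have dphi: "(phi has_real_derivative (J0 (x * \<eta>) - besselJ1 (x * \<eta>) / (x * \<eta>)) * \<eta>) (at x)"
      unfolding phi_def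
      by (rule DERIV_chain2[OF J1_deriv, where g="\<lambda>r. r * \<eta>", simplified])
         (use x eta in \<open>auto intro!: derivative_eq_intros\<close>)
    have dpsi: "(psi has_real_derivative (- besselJ1 (x * \<eta>)) * \<eta>) (at x)"
    proof -
      have "((\<lambda>r. r * \<eta>) has_real_derivative \<eta>) (at x)" by (auto intro!: derivative_eq_intros)
      from DERIV_chain2[OF J0_deriv this] show ?thesis unfolding psi_def .
    qed
    have dG: "(G has_real_derivative G1 x) (at x)" unfolding G_def G1_def by (rule FK_deriv[OF x])
    have dG1: "(G1 has_real_derivative G2 x) (at x)" unfolding G2_def G1_def by (rule FK_deriv[OF x])
    have "(F has_real_derivative
        ((J0 (x * \<eta>) - besselJ1 (x * \<eta>) / (x * \<eta>)) * \<eta>) * G1 x + G2 x * phi x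
        - \<eta> * ((- besselJ1 (x * \<eta>)) * \<eta> * G x + G1 x * psi x)) (at x)"
      unfolding F_def[abs_def]
      by (rule DERIV_diff[OF DERIV_mult[OF dphi dG1] DERIV_cmult[OF DERIV_mult[OF dpsi dG]]])
    moreover have "((J0 (x * \<eta>) - besselJ1 (x * \<eta>) / (x * \<eta>)) * \<eta>) * G1 x + G2 x * phi x
        - \<eta> * ((- besselJ1 (x * \<eta>)) * \<eta> * G x + G1 x * psi x) = f x"
    proof -
      have T: "TG x = G2 x - G1 x / x" unfolding TG_def G2_def G1_def by (rule FK_T[OF x])
      show ?thesis unfolding f_def phi_def psi_def T using x eta
        by (simp add: field_simps power2_eq_square)
    qed
    ultimately show "(F has_vector_derivative f x) (at x)"
      by (simp add: has_real_derivative_iff_has_vector_derivative[symmetric])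
    show "isCont f x" unfolding f_def phi_def TG_def G_def
      using x by (intro continuous_intros J1c_cont FK_cont)
  next
    show "set_integrable lborel (einterval (ereal 0) \<infinity>) f" using fi by simp
    have ev: "eventually (\<lambda>r. F r = 0) (at_right (0::real))"
      unfolding eventually_at_right_field
      by (intro exI[of _ 1]) (auto simp: F_def G_def G1_def FK_zero)
    have "(F \<longlongrightarrow> 0) (at_right 0)" by (rule tendsto_eventually[OF ev])
    then show "((F \<circ> real_of_ereal) \<longlongrightarrow> 0) (at_right (ereal 0))"
      by (simp add: ereal_tendsto_simps1)
    have t1: "(G1 \<longlongrightarrow> 0) at_top" unfolding G1_def by (rule FK_tendsto[OF invp_dps])
    have t0: "(G \<longlongrightarrow> 0) at_top" unfolding G_def by (rule FK_tendsto[OF inv])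
    have "(F \<longlongrightarrow> 0) at_top"
    proof (rule Lim_null_comparison)
      show "\<forall>\<^sub>F x in at_top. norm (F x) \<le> \<bar>G1 x\<bar> + \<eta> * \<bar>G x\<bar>"
        unfolding eventually_at_top_linorder
      proof (intro exI[of _ 1] allI impI)
        fix x :: real assume "x \<ge> 1"
        then have "\<bar>phi x\<bar> \<le> 1" "\<bar>psi x\<bar> \<le> 1" using bphi bpsi by auto
        then have "\<bar>phi x * G1 x\<bar> \<le> \<bar>G1 x\<bar>" "\<bar>psi x * G x\<bar> \<le> \<bar>G x\<bar>"
          by (auto simp: abs_mult intro: mult_left_le_one_le)
        moreover have "\<bar>F x\<bar> \<le> \<bar>phi x * G1 x\<bar> + \<bar>\<eta> * (psi x * G x)\<bar>"
          unfolding F_def by (rule abs_triangle_ineq4)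
        moreover have "\<bar>\<eta> * (psi x * G x)\<bar> = \<eta> * \<bar>psi x * G x\<bar>" using eta by (simp add: abs_mult)
        moreover have "\<eta> * \<bar>psi x * G x\<bar> \<le> \<eta> * \<bar>G x\<bar>"
          using eta \<open>\<bar>psi x * G x\<bar> \<le> \<bar>G x\<bar>\<close> by (intro mult_left_mono) auto
        ultimately show "norm (F x) \<le> \<bar>G1 x\<bar> + \<eta> * \<bar>G x\<bar>" by simp
      qed
      show "((\<lambda>x. \<bar>G1 x\<bar> + \<eta> * \<bar>G x\<bar>) \<longlongrightarrow> 0) at_top"
        using tendsto_add[OF tendsto_rabs[OF t1] tendsto_mult[OF tendsto_const tendsto_rabs[OF t0]]] by simp
    qed
    then show "((F \<circ> real_of_ereal) \<longlongrightarrow> 0) (at_left \<infinity>)"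
      by (simp add: ereal_tendsto_simps1)
  qed
  then have "(LBINT x:{0<..}. f x) = 0" by (simp add: interval_lebesgue_integral_def)
  then have "(LBINT r:{0<..}. phi r * TG r) + \<eta>^2 * (LBINT r:{0<..}. phi r * G r) = 0"
    unfolding f_def using set_integral_add(2)[OF i1 set_integrable_mult_right[OF i2]] by simp
  then have "(LBINT r:{0<..}. phi r * G r) = - (1/\<eta>^2) * (LBINT r:{0<..}. phi r * TG r)"
    using eta by (simp add: field_simps)
  then show ?thesis unfolding phi_def G_def TG_def .
qed

end


context cutoff
begin

fun Titer :: "nat \<Rightarrow> nat \<times> (nat \<Rightarrow> real poly)" where
  "Titer 0 = (1, \<lambda>_. monom 1 4)"
| "Titer (Suc m) = (Suc (Suc (fst (Titer m))), Tps (fst (Titer m)) (snd (Titer m)))"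

lemma Titer_inv: "invp (snd (Titer m))"
proof (cases m)
  case 0 then show ?thesis by (simp add: invp_def)
next
  case (Suc n) then show ?thesis by (simp add: invp_T)
qed

lemma FK0: "r > 0 \<Longrightarrow> FK 1 (\<lambda>_. monom 1 4) r = chi r / r^4"
  by (simp add: FK_def D0 poly_monom field_simps)

lemma H_iter:
  assumes eta: "\<eta> > 0"
  shows "hankel1 (\<lambda>x. chi x / x ^ 5) \<eta> = (- 1 / \<eta>^2)^m *
     (LBINT r:{0<..}. besselJ1 (r * \<eta>) * FK (fst (Titer m)) (snd (Titer m)) r)"
proof (induction m)
  case 0
  have "hankel1 (\<lambda>x. chi x / x ^ 5) \<eta> = (LBINT r:{0<..}. besselJ1 (r * \<eta>) * FK 1 (\<lambda>_. monom 1 4) r)"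
    unfolding hankel1_def
  proof (rule set_cong_int(1))
    fix r :: real assume "r \<in> {0<..}"
    then have r: "r > 0" by simp
    have e: "chi r / r ^ 5 * r = chi r / r^4" using r by (simp add: eval_nat_numeral)
    have "besselJ1 (r * \<eta>) * (chi r / r ^ 5) * r = besselJ1 (r * \<eta>) * (chi r / r ^ 5 * r)"
      by (simp only: mult.assoc)
    also have "\<dots> = besselJ1 (r * \<eta>) * FK 1 (\<lambda>_. monom 1 4) r" by (simp only: e FK0[OF r])
    finally show "besselJ1 (r * \<eta>) * (chi r / r ^ 5) * r = besselJ1 (r * \<eta>) * FK 1 (\<lambda>_. monom 1 4) r" .
  qed
  then show ?case by simp
next
  case (Suc m)
  let ?X = "LBINT r:{0<..}. besselJ1 (r * \<eta>) * FK (fst (Titer m)) (snd (Titer m)) r"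
  let ?Y = "LBINT r:{0<..}. besselJ1 (r * \<eta>) * FK (fst (Titer (Suc m))) (snd (Titer (Suc m))) r"
  have "?X = - (1 / \<eta>^2) * ?Y" using IBP[OF Titer_inv eta, of "fst (Titer m)" m] by simp
  then have "hankel1 (\<lambda>x. chi x / x ^ 5) \<eta> = (- 1 / \<eta>^2)^m * (- (1 / \<eta>^2) * ?Y)" using Suc by simp
  also have "\<dots> = (- 1 / \<eta>^2)^(Suc m) * ?Y" by (simp only: power_Suc minus_divide_left mult.assoc) (rule mult.left_commute)
  finally show ?case .
qed

lemma large_bound:
  "\<exists>C\<ge>0. \<forall>\<eta>>0. \<bar>hankel1 (\<lambda>x. chi x / x ^ 5) \<eta>\<bar> \<le> C * (1 / \<eta>^2)^m"
proof -
  let ?N = "fst (Titer m)" and ?ps = "snd (Titer m)"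
  have i1: "set_integrable lborel {0<..} (\<lambda>r. 1 * FK ?N ?ps r)"
    by (rule FK_int[OF Titer_inv]) auto
  then have ia: "set_integrable lborel {0<..} (\<lambda>r. \<bar>FK ?N ?ps r\<bar>)" by (simp add: set_integrable_abs)
  define C where "C = (LBINT r:{0<..}. \<bar>FK ?N ?ps r\<bar>)"
  have C0: "C \<ge> 0" unfolding C_def set_lebesgue_integral_def
    by (rule Bochner_Integration.integral_nonneg) (simp add: indicator_def)
  show ?thesis
  proof (intro exI[of _ C] conjI allI impI C0)
    fix \<eta> :: real assume eta: "\<eta> > 0"
    have cphi: "continuous_on {0<..} (\<lambda>r. besselJ1 (r * \<eta>))"
      by (intro continuous_at_imp_continuous_on ballI J1c_cont)
    have i2: "set_integrable lborel {0<..} (\<lambda>r. besselJ1 (r * \<eta>) * FK ?N ?ps r)"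
      by (rule FK_int[OF Titer_inv cphi]) (use eta in \<open>auto intro!: J1_bound\<close>)
    have "\<bar>LBINT r:{0<..}. besselJ1 (r * \<eta>) * FK ?N ?ps r\<bar> \<le> (LBINT r:{0<..}. \<bar>besselJ1 (r * \<eta>) * FK ?N ?ps r\<bar>)"
      using set_integral_norm_bound[OF i2] by simp
    also have "\<dots> \<le> C" unfolding C_def
    proof (rule set_integral_mono[OF set_integrable_abs[OF i2] ia])
      fix r :: real assume "r \<in> {0<..}"
      then have "\<bar>besselJ1 (r * \<eta>)\<bar> \<le> 1" using eta by (intro J1_bound) simp
      then show "\<bar>besselJ1 (r * \<eta>) * FK ?N ?ps r\<bar> \<le> \<bar>FK ?N ?ps r\<bar>"
        by (simp add: abs_mult mult_left_le_one_le)
    qed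
    finally have b: "\<bar>LBINT r:{0<..}. besselJ1 (r * \<eta>) * FK ?N ?ps r\<bar> \<le> C" .
    have "\<bar>hankel1 (\<lambda>x. chi x / x ^ 5) \<eta>\<bar> = (1 / \<eta>^2)^m * \<bar>LBINT r:{0<..}. besselJ1 (r * \<eta>) * FK ?N ?ps r\<bar>"
      unfolding H_iter[OF eta, of m] by (simp add: abs_mult power_abs)
    also have "\<dots> \<le> (1 / \<eta>^2)^m * C" using b by (intro mult_left_mono) auto
    finally show "\<bar>hankel1 (\<lambda>x. chi x / x ^ 5) \<eta>\<bar> \<le> C * (1 / \<eta>^2)^m" by (simp add: mult.commute)
  qed
qed

lemma large_bound_k:
  assumes "k \<ge> 0"
  shows "\<exists>Ck>0. \<forall>\<eta>\<ge>1. \<bar>hankel1 (\<lambda>x. chi x / x ^ 5) \<eta>\<bar> \<le> Ck / \<eta> powr k"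
proof -
  define m where "m = nat \<lceil>k\<rceil>"
  have km: "k \<le> real m" unfolding m_def by linarith
  obtain C where C: "C \<ge> 0" "\<forall>\<eta>>0. \<bar>hankel1 (\<lambda>x. chi x / x ^ 5) \<eta>\<bar> \<le> C * (1 / \<eta>^2)^m"
    using large_bound[of m] by blast
  show ?thesis
  proof (intro exI[of _ "C + 1"] conjI allI impI)
    show "C + 1 > 0" using C by simp
    fix \<eta> :: real assume eta: "\<eta> \<ge> 1"
    have "(1 / \<eta>^2)^m = 1 / \<eta>^(2*m)" by (simp add: power_mult power_one_over)
    also have "\<dots> \<le> 1 / \<eta>^m"
      using eta by (intro divide_left_mono power_increasing) auto
    also have "\<eta>^m = \<eta> powr real m" using eta by (simp add: powr_realpow)
    also have "1 / \<eta> powr real m \<le> 1 / \<eta> powr k"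
      using eta km by (intro divide_left_mono powr_mono) auto
    finally have "(1 / \<eta>^2)^m \<le> 1 / \<eta> powr k" .
    then have "C * (1 / \<eta>^2)^m \<le> C * (1 / \<eta> powr k)" using C by (intro mult_left_mono) auto
    also have "\<dots> \<le> (C + 1) / \<eta> powr k" using eta by (simp add: divide_right_mono)
    finally have "C * (1 / \<eta>^2)^m \<le> (C + 1) / \<eta> powr k" .
    then show "\<bar>hankel1 (\<lambda>x. chi x / x ^ 5) \<eta>\<bar> \<le> (C + 1) / \<eta> powr k"
      using C(2) eta by (meson order_trans less_le_trans zero_less_one)
  qed
qed

end


lemma log_integral:
  assumes eta: "\<eta> > 0"
  shows "set_integrable lborel {1<..} (\<lambda>r::real. 1 / (r * (1 + (r * \<eta>)^2)))"
    and "(LBINT r:{1<..}. 1 / (r * (1 + (r * \<eta>)^2))) = - ln \<eta> + ln (1 + \<eta>^2) / 2"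
proof -
  define F where "F r = ln r - ln (1 + (r * \<eta>)^2) / 2" for r :: real
  have pos: "1 + (r * \<eta>)^2 > 0" for r :: real by (simp add: add_pos_nonneg)
  have D: "(F has_real_derivative 1 / (x * (1 + (x * \<eta>)^2))) (at x)" if x: "ereal 1 < ereal x" "ereal x < \<infinity>" for x
  proof -
    have x0: "x > 0" using x by simp
    have p: "1 + (x * \<eta>)^2 > 0" by (rule pos)
    have d2: "((\<lambda>r. 1 + (r*\<eta>)^2) has_real_derivative 2*x*\<eta>^2) (at x)"
      by (rule DERIV_cong[OF DERIV_add[OF DERIV_const DERIV_power[OF DERIV_cmult_right[OF DERIV_ident]]]])
         (simp add: power2_eq_square)
    have d3: "((\<lambda>r. ln (1 + (r*\<eta>)^2)) has_real_derivative inverse (1 + (x*\<eta>)^2) * (2*x*\<eta>^2)) (at x)"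
      by (rule DERIV_chain2[OF DERIV_ln[OF p] d2])
    have d: "(F has_real_derivative inverse x - inverse (1 + (x*\<eta>)^2) * (2*x*\<eta>^2) / 2) (at x)"
      unfolding F_def[abs_def] by (rule DERIV_diff[OF DERIV_ln[OF x0] DERIV_cdivide[OF d3]])
    have g: "inverse x - inverse P * (2*x*\<eta>^2) / 2 = (P - x^2*\<eta>^2) / (x * P)" if "P > 0" for P
      using x0 that by (simp add: field_simps power2_eq_square)
    have "inverse x - inverse (1 + (x*\<eta>)^2) * (2*x*\<eta>^2) / 2 = 1 / (x * (1 + (x * \<eta>)^2))"
      unfolding g[OF p] by (simp add: power_mult_distrib)
    then show ?thesis using d by simp
  qed
  have C: "isCont (\<lambda>r. 1 / (r * (1 + (r * \<eta>)^2))) x" if x: "ereal 1 < ereal x" "ereal x < \<infinity>" for x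
    using x pos[of x] by (intro continuous_intros) auto
  have NN: "AE x in lborel. ereal 1 < ereal x \<longrightarrow> ereal x < \<infinity> \<longrightarrow> 0 \<le> 1 / (x * (1 + (x * \<eta>)^2))"
    using pos by (auto intro!: AE_I2 divide_nonneg_pos)
  have A: "((F \<circ> real_of_ereal) \<longlongrightarrow> F 1) (at_right (ereal 1))"
  proof -
    have "(F \<longlongrightarrow> F 1) (at_right 1)" unfolding F_def using pos[of 1]
      by (intro tendsto_intros) auto
    then show ?thesis by (simp add: ereal_tendsto_simps1)
  qed
  have B: "((F \<circ> real_of_ereal) \<longlongrightarrow> - ln \<eta>) (at_left \<infinity>)"
  proof -
    have t: "((\<lambda>r. ln (inverse r ^ 2 + \<eta>^2)) \<longlongrightarrow> ln (0 ^ 2 + \<eta>^2)) at_top"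
      using eta by (intro tendsto_intros tendsto_inverse_0_at_top filterlim_ident) auto
    have "((\<lambda>r. - (ln (inverse r ^ 2 + \<eta>^2)) / 2) \<longlongrightarrow> - (ln (\<eta>^2)) / 2) at_top"
      using tendsto_divide[OF tendsto_minus[OF t] tendsto_const[of 2]] by simp
    moreover have "ln (\<eta>^2) = 2 * ln \<eta>" by (simp add: ln_realpow)
    moreover have "eventually (\<lambda>r. - (ln (inverse r ^ 2 + \<eta>^2)) / 2 = F r) at_top"
      unfolding eventually_at_top_linorder
    proof (intro exI[of _ 1] allI impI)
      fix r :: real assume "r \<ge> 1"
      then have r: "r > 0" by simp
      have "1 + (r * \<eta>)^2 = r^2 * (inverse r ^ 2 + \<eta>^2)" using r by (simp add: field_simps)
      then have "ln (1 + (r * \<eta>)^2) = ln (r^2) + ln (inverse r ^ 2 + \<eta>^2)"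
        using r eta by (simp add: ln_mult add_pos_nonneg)
      then show "- (ln (inverse r ^ 2 + \<eta>^2)) / 2 = F r" unfolding F_def by (simp add: ln_realpow field_simps)
    qed
    ultimately have "(F \<longlongrightarrow> - ln \<eta>) at_top" using tendsto_cong by fastforce
    then show ?thesis by (simp add: ereal_tendsto_simps1)
  qed
  have F1: "F 1 = - ln (1 + \<eta>^2) / 2" by (simp add: F_def)
  have "set_integrable lborel (einterval (ereal 1) \<infinity>) (\<lambda>r::real. 1 / (r * (1 + (r * \<eta>)^2)))"
    by (rule interval_integral_FTC_nonneg(1)[OF _ D C NN A B]) auto
  then show "set_integrable lborel {1<..} (\<lambda>r::real. 1 / (r * (1 + (r * \<eta>)^2)))" by simp
  have "(LBINT r=ereal 1..\<infinity>. 1 / (r * (1 + (r * \<eta>)^2))) = - ln \<eta> - F 1"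
    by (rule interval_integral_FTC_nonneg(2)[OF _ D C NN A B]) auto
  then show "(LBINT r:{1<..}. 1 / (r * (1 + (r * \<eta>)^2))) = - ln \<eta> + ln (1 + \<eta>^2) / 2"
    by (simp add: interval_lebesgue_integral_def F1)
qed

lemma jbr_ge: "\<bar>y\<bar> + 1 \<le> 2 * jbr y"
proof -
  have h: "0 \<le> (\<bar>y\<bar> - 1)^2" by simp
  have e1: "(\<bar>y\<bar> - 1)^2 = y^2 - 2 * \<bar>y\<bar> + 1"
    by (simp add: power2_eq_square algebra_simps abs_mult_self_eq)
  have e2: "((\<bar>y\<bar> + 1) / 2)^2 = (y^2 + 2 * \<bar>y\<bar> + 1) / 4"
    by (simp add: power2_eq_square field_simps abs_mult_self_eq)
  have "((\<bar>y\<bar> + 1) / 2)^2 \<le> 1 + y^2"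
    unfolding e2 using h e1 by (simp add: field_simps)
  then have "(\<bar>y\<bar> + 1) / 2 \<le> sqrt (1 + y^2)" by (rule real_le_rsqrt)
  then show ?thesis unfolding jbr_def by simp
qed


context cutoff
begin

lemma chi_bound: "\<exists>M\<ge>1. \<forall>r\<ge>1. \<bar>chi r\<bar> \<le> M"
proof -
  have "continuous_on {1..2} (D 0)"
    by (intro continuous_at_imp_continuous_on ballI Dcont) auto
  moreover have "continuous_on {1..2} chi = continuous_on {1..2} (D 0)"
    by (rule continuous_on_cong) (auto simp: D0)
  ultimately have "continuous_on {1..2} chi" by simp
  then obtain B where B: "B \<ge> 0" "\<forall>x\<in>{1..2}. \<bar>chi x\<bar> \<le> B" using cont_bound by blast
  show ?thesis
  proof (intro exI[of _ "max B 1"] conjI allI impI)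
    fix r :: real assume "r \<ge> 1"
    show "\<bar>chi r\<bar> \<le> max B 1"
    proof (cases "r \<le> 2")
      case True
      then have "\<bar>chi r\<bar> \<le> B" using B(2) \<open>r \<ge> 1\<close> by auto
      then show ?thesis by simp
    next
      case False
      then show ?thesis using chi1[of r] by simp
    qed
  qed simp
qed

lemma small_bound:
  assumes ig: "set_integrable lborel {0<..} (\<lambda>x. chi x / x^3)"
    and iz: "(LBINT x:{0<..}. chi x / x^3) = 0"
  shows "\<exists>C>0. \<forall>\<eta>. 0 < \<eta> \<and> \<eta> < 1 \<longrightarrow>
          \<bar>hankel1 (\<lambda>x. chi x / x ^ 5) \<eta>\<bar> \<le> C * \<eta> ^ 3 * jbr (ln \<eta>)"
proof -
  obtain M where M: "M \<ge> 1" "\<forall>r\<ge>1. \<bar>chi r\<bar> \<le> M" using chi_bound by blast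
  define K :: real where "K = 2 * exp 1 + 3"
  have K: "K > 0" unfolding K_def by (simp add: add_pos_pos)
  define G0 where "G0 = FK 1 (\<lambda>_. monom 1 4)"
  have G0: "\<And>r. r > 0 \<Longrightarrow> G0 r = chi r / r^4" unfolding G0_def by (rule FK0)
  show ?thesis
  proof (intro exI[of _ "2 * K * M"] conjI allI impI)
    show "2 * K * M > 0" using K M by simp
    fix \<eta> :: real assume "0 < \<eta> \<and> \<eta> < 1"
    then have eta: "\<eta> > 0" "\<eta> < 1" by auto
    define phi where "phi r = besselJ1 (r * \<eta>)" for r
    have cphi: "continuous_on {0<..} phi" unfolding phi_def
      by (intro continuous_at_imp_continuous_on ballI J1c_cont)
    have H: "hankel1 (\<lambda>x. chi x / x ^ 5) \<eta> = (LBINT r:{0<..}. phi r * G0 r)"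
      using H_iter[OF eta(1), of 0] unfolding phi_def G0_def by simp
    have iA: "set_integrable lborel {0<..} (\<lambda>r. phi r * G0 r)"
      unfolding G0_def using FK_int[OF Titer_inv[of 0] cphi] eta
      by (simp add: phi_def J1_bound)
    have cB: "\<And>r. r \<in> {0<..} \<Longrightarrow> r * \<eta> / 2 * G0 r = \<eta> / 2 * (chi r / r^3)"
      by (simp add: G0 eval_nat_numeral field_simps)
    have "set_integrable lborel {0<..} (\<lambda>r. \<eta> / 2 * (chi r / r^3))"
      by (rule set_integrable_mult_right) (rule ig)
    then have iB: "set_integrable lborel {0<..} (\<lambda>r. r * \<eta> / 2 * G0 r)"
      using set_cong_int(2)[of "{0<..}" "\<lambda>r. r * \<eta> / 2 * G0 r" "\<lambda>r. \<eta> / 2 * (chi r / r^3)" lborel] cB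
      by blast
    have "(LBINT r:{0<..}. r * \<eta> / 2 * G0 r) = (LBINT r:{0<..}. \<eta> / 2 * (chi r / r^3))"
      by (rule set_cong_int(1)) (rule cB)
    also have "\<dots> = \<eta> / 2 * (LBINT r:{0<..}. chi r / r^3)" by (rule set_integral_mult_right)
    finally have vB: "(LBINT r:{0<..}. r * \<eta> / 2 * G0 r) = 0" using iz by simp
    define E where "E r = (phi r - r * \<eta> / 2) * G0 r" for r
    have iE: "set_integrable lborel {0<..} E"
      using set_integral_diff(1)[OF iA iB] unfolding E_def by (simp add: algebra_simps)
    have HE: "hankel1 (\<lambda>x. chi x / x ^ 5) \<eta> = (LBINT r:{0<..}. E r)"
      using set_integral_diff(2)[OF iA iB] vB unfolding H E_def by (simp add: algebra_simps)
    have Ez: "\<And>r. r \<in> {0<..} - {1<..} \<Longrightarrow> \<bar>E r\<bar> = 0"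
      by (auto simp: E_def G0 chi0)
    have iE1: "set_integrable lborel {1<..} (\<lambda>r. \<bar>E r\<bar>)"
      using set_integral_shrink(2)[of "{1<..}" "{0<..}" "\<lambda>r. \<bar>E r\<bar>" lborel] Ez set_integrable_abs[OF iE]
      by auto
    have iL: "set_integrable lborel {1<..} (\<lambda>r. K * M * \<eta>^3 * (1 / (r * (1 + (r * \<eta>)^2))))"
      using log_integral(1)[OF eta(1)] by (intro set_integrable_mult_right)
    have "\<bar>hankel1 (\<lambda>x. chi x / x ^ 5) \<eta>\<bar> \<le> (LBINT r:{0<..}. \<bar>E r\<bar>)"
      unfolding HE using set_integral_norm_bound[OF iE] by simp
    also have "\<dots> = (LBINT r:{1<..}. \<bar>E r\<bar>)"
      using set_integral_shrink(1)[of "{1<..}" "{0<..}" "\<lambda>r. \<bar>E r\<bar>" lborel] Ez by auto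
    also have "\<dots> \<le> (LBINT r:{1<..}. K * M * \<eta>^3 * (1 / (r * (1 + (r * \<eta>)^2))))"
    proof (rule set_integral_mono[OF iE1 iL])
      fix r :: real assume "r \<in> {1<..}"
      then have r: "r > 1" by simp
      have rp: "r > 0" using r by simp
      have pos: "1 + (r * \<eta>)^2 > 0" by (simp add: add_pos_nonneg)
      have e1: "\<bar>phi r - r * \<eta> / 2\<bar> \<le> K * ((r * \<eta>)^3 / (1 + (r * \<eta>)^2))"
        unfolding phi_def K_def using J1_remainder[of "r * \<eta>"] rp eta by simp
      have e2: "\<bar>G0 r\<bar> \<le> M / r^4"
        using G0[OF rp] M r by (simp add: abs_divide divide_right_mono)
      have "\<bar>E r\<bar> = \<bar>phi r - r * \<eta> / 2\<bar> * \<bar>G0 r\<bar>" by (simp add: E_def abs_mult)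
      also have "\<dots> \<le> K * ((r * \<eta>)^3 / (1 + (r * \<eta>)^2)) * (M / r^4)"
        using e1 e2 by (intro mult_mono) auto
      also have "\<dots> = K * M * \<eta>^3 * (1 / (r * (1 + (r * \<eta>)^2)))"
        using rp pos by (simp add: field_simps eval_nat_numeral)
      finally show "\<bar>E r\<bar> \<le> K * M * \<eta>^3 * (1 / (r * (1 + (r * \<eta>)^2)))" .
    qed
    also have "\<dots> = K * M * \<eta>^3 * (- ln \<eta> + ln (1 + \<eta>^2) / 2)"
      using log_integral(2)[OF eta(1)]
      by (subst set_integral_mult_right) (simp only:)
    also have "\<dots> \<le> K * M * \<eta>^3 * (2 * jbr (ln \<eta>))"
    proof (intro mult_left_mono)
      have "ln (1 + \<eta>^2) \<le> \<eta>^2" using ln_le_minus_one[of "1 + \<eta>^2"] by (simp add: add_pos_nonneg)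
      also have "\<eta>^2 \<le> 1" using eta by (simp add: power_le_one)
      finally have "ln (1 + \<eta>^2) / 2 \<le> 1" by simp
      moreover have "- ln \<eta> \<le> \<bar>ln \<eta>\<bar>" by simp
      ultimately show "- ln \<eta> + ln (1 + \<eta>^2) / 2 \<le> 2 * jbr (ln \<eta>)" using jbr_ge[of "ln \<eta>"] by linarith
      show "0 \<le> K * M * \<eta>^3" using K M eta by simp
    qed
    also have "\<dots> = 2 * K * M * \<eta> ^ 3 * jbr (ln \<eta>)" by simp
    finally show "\<bar>hankel1 (\<lambda>x. chi x / x ^ 5) \<eta>\<bar> \<le> 2 * K * M * \<eta> ^ 3 * jbr (ln \<eta>)" .
  qed
qed

end


definition gq :: "real poly" where "gq = [:-2, 3, -1:]"

lemma gq_eval: "poly gq x = (x - 1) * (2 - x)"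
  by (simp add: gq_def algebra_simps)

lemma gq_pos: "1 < x \<Longrightarrow> x < 2 \<Longrightarrow> poly gq x > 0"
  by (simp add: gq_eval)

primrec Pb :: "nat \<Rightarrow> real poly" where
  "Pb 0 = 1"
| "Pb (Suc n) = pderiv (Pb n) * gq^2 - smult (2 * real n) (Pb n * pderiv gq * gq) + Pb n * pderiv gq"

definition Qf :: "real poly \<Rightarrow> nat \<Rightarrow> real \<Rightarrow> real" where
  "Qf p k x = (if 1 < x \<and> x < 2 then poly p x * inverse (poly gq x) ^ k * exp (- inverse (poly gq x)) else 0)"

definition Db :: "nat \<Rightarrow> real \<Rightarrow> real" where
  "Db n = Qf (Pb n) (2 * n)"

lemma E0: "((\<lambda>t. inverse t ^ k * exp (- inverse t)) \<longlongrightarrow> 0) (at_right (0::real))"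
proof -
  have "((\<lambda>t. (\<lambda>s. s ^ k / exp s) (inverse t)) \<longlongrightarrow> 0) (at_right (0::real))"
    by (rule filterlim_compose[OF tendsto_power_div_exp_0 filterlim_inverse_at_top_right])
  then show ?thesis by (simp add: exp_minus divide_inverse)
qed

lemma gq_right1: "filterlim (poly gq) (at_right 0) (at_right 1)"
  unfolding filterlim_at
proof
  show "\<forall>\<^sub>F x in at_right 1. poly gq x \<in> {0<..} \<and> poly gq x \<noteq> 0"
    unfolding eventually_at_right_field by (intro exI[of _ 2]) (auto simp: gq_eval)
  have "(poly gq \<longlongrightarrow> poly gq 1) (at_right 1)" by (intro tendsto_intros)
  then show "(poly gq \<longlongrightarrow> 0) (at_right 1)" by (simp add: gq_eval)
qed

lemma gq_left2: "filterlim (poly gq) (at_right 0) (at_left 2)"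
  unfolding filterlim_at
proof
  show "\<forall>\<^sub>F x in at_left 2. poly gq x \<in> {0<..} \<and> poly gq x \<noteq> 0"
    unfolding eventually_at_left_field by (intro exI[of _ 1]) (auto simp: gq_eval)
  have "(poly gq \<longlongrightarrow> poly gq 2) (at_left 2)" by (intro tendsto_intros)
  then show "(poly gq \<longlongrightarrow> 0) (at_left 2)" by (simp add: gq_eval)
qed

lemma Qf_lim1: "(Qf p k \<longlongrightarrow> 0) (at 1)"
proof -
  have L: "(Qf p k \<longlongrightarrow> 0) (at_left 1)"
  proof (rule tendsto_eventually)
    show "\<forall>\<^sub>F x in at_left 1. Qf p k x = 0"
      unfolding eventually_at_left_field by (intro exI[of _ 0]) (auto simp: Qf_def)
  qed
  have "((\<lambda>x. poly p x * (inverse (poly gq x) ^ k * exp (- inverse (poly gq x)))) \<longlongrightarrow> poly p 1 * 0) (at_right 1)"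
    by (intro tendsto_mult tendsto_intros filterlim_compose[OF E0 gq_right1])
  moreover have "\<forall>\<^sub>F x in at_right 1. poly p x * (inverse (poly gq x) ^ k * exp (- inverse (poly gq x))) = Qf p k x"
    unfolding eventually_at_right_field by (intro exI[of _ 2]) (auto simp: Qf_def)
  ultimately have R: "(Qf p k \<longlongrightarrow> 0) (at_right 1)" using tendsto_cong by force
  show ?thesis using L R by (simp add: filterlim_at_split)
qed

lemma Qf_lim2: "(Qf p k \<longlongrightarrow> 0) (at 2)"
proof -
  have R: "(Qf p k \<longlongrightarrow> 0) (at_right 2)"
  proof (rule tendsto_eventually)
    show "\<forall>\<^sub>F x in at_right 2. Qf p k x = 0"
      unfolding eventually_at_right_field by (intro exI[of _ 3]) (auto simp: Qf_def)
  qed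
  have "((\<lambda>x. poly p x * (inverse (poly gq x) ^ k * exp (- inverse (poly gq x)))) \<longlongrightarrow> poly p 2 * 0) (at_left 2)"
    by (intro tendsto_mult tendsto_intros filterlim_compose[OF E0 gq_left2])
  moreover have "\<forall>\<^sub>F x in at_left 2. poly p x * (inverse (poly gq x) ^ k * exp (- inverse (poly gq x))) = Qf p k x"
    unfolding eventually_at_left_field by (intro exI[of _ 1]) (auto simp: Qf_def)
  ultimately have L: "(Qf p k \<longlongrightarrow> 0) (at_left 2)" using tendsto_cong by force
  show ?thesis using L R by (simp add: filterlim_at_split)
qed

lemma alg_bump:
  fixes g u v w c d1 P g' e :: real
  assumes "g * u = 1" "v * u = c * w"
  shows "(d1 * w + (v * (- (u * g' * u))) * P) * e + (e * (- (- (u * g' * u)))) * (P * w)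
       = (d1 * g^2 - c * (P * g' * g) + P * g') * (w * u * u) * e"
proof -
  have "(d1 * g^2 - c * (P * g' * g) + P * g') * (w * u * u) * e
      = d1 * w * e * (g*u)^2 - (c * w) * u * P * g' * e * (g * u) + P * g' * w * u * u * e"
    by (simp add: algebra_simps power2_eq_square)
  also have "\<dots> = d1 * w * e - (v * u) * u * P * g' * e + P * g' * w * u * u * e"
    using assms by simp
  finally show ?thesis by (simp add: algebra_simps)
qed

lemma Db_deriv_int:
  assumes x: "1 < x" "x < 2"
  shows "(Db n has_real_derivative Db (Suc n) x) (at x)"
proof -
  let ?P = "\<lambda>y. poly (Pb n) y" and ?u = "\<lambda>y. inverse (poly gq y)"
  have g0: "poly gq x \<noteq> 0" using gq_pos[OF x] by simp
  have du: "(?u has_real_derivative - (?u x * poly (pderiv gq) x * ?u x)) (at x)"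
    by (rule DERIV_inverse'[OF poly_DERIV g0])
  have d2: "((\<lambda>y. ?u y ^ (2*n)) has_real_derivative real (2*n) * ?u x ^ (2*n - 1) * (- (?u x * poly (pderiv gq) x * ?u x))) (at x)"
    using DERIV_power[OF du, of "2*n"] by (simp add: mult_ac)
  have d3: "((\<lambda>y. exp (- ?u y)) has_real_derivative exp (- ?u x) * (- (- (?u x * poly (pderiv gq) x * ?u x)))) (at x)"
    by (rule DERIV_chain2[OF DERIV_exp DERIV_minus[OF du]])
  have dh: "((\<lambda>y. ?P y * ?u y ^ (2*n) * exp (- ?u y)) has_real_derivative
      (poly (pderiv (Pb n)) x * ?u x ^ (2*n) + (real (2*n) * ?u x ^ (2*n - 1) * (- (?u x * poly (pderiv gq) x * ?u x))) * ?P x) * exp (- ?u x)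
      + (exp (- ?u x) * (- (- (?u x * poly (pderiv gq) x * ?u x)))) * (?P x * ?u x ^ (2*n))) (at x)"
    by (rule DERIV_mult[OF DERIV_mult[OF poly_DERIV d2] d3])
  have vu: "(real (2*n) * ?u x ^ (2*n - 1)) * ?u x = real (2*n) * ?u x ^ (2*n)"
    by (cases n) (auto simp: power_Suc2[symmetric] mult.assoc)
  have eq: "(poly (pderiv (Pb n)) x * ?u x ^ (2*n) + (real (2*n) * ?u x ^ (2*n - 1) * (- (?u x * poly (pderiv gq) x * ?u x))) * ?P x) * exp (- ?u x)
      + (exp (- ?u x) * (- (- (?u x * poly (pderiv gq) x * ?u x)))) * (?P x * ?u x ^ (2*n))
      = Db (Suc n) x"
  proof -
    have B: "Db (Suc n) x = (poly (pderiv (Pb n)) x * poly gq x ^ 2 - real (2*n) * (?P x * poly (pderiv gq) x * poly gq x) + ?P x * poly (pderiv gq) x)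
        * (?u x ^ (2*n) * ?u x * ?u x) * exp (- ?u x)"
      using x by (simp add: Db_def Qf_def poly_power mult_ac power_add power2_eq_square)
    have A: "(poly (pderiv (Pb n)) x * ?u x ^ (2*n) + (real (2*n) * ?u x ^ (2*n - 1) * (- (?u x * poly (pderiv gq) x * ?u x))) * ?P x) * exp (- ?u x)
      + (exp (- ?u x) * (- (- (?u x * poly (pderiv gq) x * ?u x)))) * (?P x * ?u x ^ (2*n))
      = (poly (pderiv (Pb n)) x * poly gq x ^ 2 - real (2*n) * (?P x * poly (pderiv gq) x * poly gq x) + ?P x * poly (pderiv gq) x)
        * (?u x ^ (2*n) * ?u x * ?u x) * exp (- ?u x)"
      by (rule alg_bump) (use g0 vu in auto)
    show ?thesis using A B by simp
  qed
  have "(Db n has_real_derivative Db (Suc n) x) (at x)"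
  proof (rule has_field_derivative_transform_within_open[OF _ _ _])
    show "((\<lambda>y. ?P y * ?u y ^ (2*n) * exp (- ?u y)) has_real_derivative Db (Suc n) x) (at x)"
      using dh eq by simp
    show "open {1<..<2::real}" by simp
    show "x \<in> {1<..<2}" using x by simp
    fix y :: real assume "y \<in> {1<..<2}"
    then show "?P y * ?u y ^ (2*n) * exp (- ?u y) = Db n y" by (simp add: Db_def Qf_def)
  qed
  then show ?thesis .
qed

lemma Db_out: "x \<le> 1 \<or> x \<ge> 2 \<Longrightarrow> Db n x = 0"
  by (auto simp: Db_def Qf_def)

lemma Db_deriv: "(Db n has_real_derivative Db (Suc n) x) (at x)"
proof -
  consider "x < 1" | "x = 1" | "1 < x \<and> x < 2" | "x = 2" | "x > 2" by linarith
  then show ?thesis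
  proof cases
    case 1
    have "(Db n has_real_derivative 0) (at x)"
      by (rule has_field_derivative_transform_within_open[where f="\<lambda>_. 0" and S="{..<1}"])
         (use 1 in \<open>auto simp: Db_out\<close>)
    then show ?thesis using 1 by (simp add: Db_out)
  next
    case 5
    have "(Db n has_real_derivative 0) (at x)"
      by (rule has_field_derivative_transform_within_open[where f="\<lambda>_. 0" and S="{2<..}"])
         (use 5 in \<open>auto simp: Db_out\<close>)
    then show ?thesis using 5 by (simp add: Db_out)
  next
    case 3 then show ?thesis using Db_deriv_int by auto
  next
    case 2
    have ev: "\<forall>\<^sub>F y in at 1. Qf (Pb n * [:2, -1:]) (2*n+1) y = (Db n y - Db n 1) / (y - 1)"
      unfolding eventually_at_filter
    proof (rule always_eventually, intro allI impI)
      fix y :: real assume "y \<noteq> 1"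
      show "Qf (Pb n * [:2, -1:]) (2*n+1) y = (Db n y - Db n 1) / (y - 1)"
      proof (cases "1 < y \<and> y < 2")
        case True
        have "y - 1 \<noteq> 0" "2 - y \<noteq> 0" using True by auto
        then have I: "inverse (poly gq y) * (2 - y) = 1 / (y - 1)"
          by (simp add: gq_eval inverse_mult_distrib divide_inverse)
        have "Qf (Pb n * [:2, -1:]) (2*n+1) y = (poly (Pb n) y * inverse (poly gq y)^(2*n) * exp (- inverse (poly gq y))) * (inverse (poly gq y) * (2 - y))"
          using True by (simp add: Qf_def mult_ac power_add algebra_simps)
        also have "\<dots> = Db n y * (1 / (y - 1))" unfolding I using True by (simp add: Db_def Qf_def)
        finally show ?thesis by (simp add: Db_out)
      qed (auto simp: Db_def Qf_def)
    qed
    have "((\<lambda>y. (Db n y - Db n 1) / (y - 1)) \<longlongrightarrow> 0) (at 1)"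
      using tendsto_cong[OF ev] Qf_lim1 by blast
    then show ?thesis using 2 by (simp add: has_field_derivative_iff Db_out)
  next
    case 4
    have ev: "\<forall>\<^sub>F y in at 2. Qf (Pb n * [:1, -1:]) (2*n+1) y = (Db n y - Db n 2) / (y - 2)"
      unfolding eventually_at_filter
    proof (rule always_eventually, intro allI impI)
      fix y :: real assume "y \<noteq> 2"
      show "Qf (Pb n * [:1, -1:]) (2*n+1) y = (Db n y - Db n 2) / (y - 2)"
      proof (cases "1 < y \<and> y < 2")
        case True
        have "y - 1 \<noteq> 0" "2 - y \<noteq> 0" using True by auto
        then have "inverse (poly gq y) * (1 - y) = 1 / (y - 2)"
        proof -
          assume a: "y - 1 \<noteq> 0" "2 - y \<noteq> 0"
          have "inverse (poly gq y) * (1 - y) = inverse (y - 1) * inverse (2 - y) * (- (y - 1))"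
            by (simp add: gq_eval inverse_mult_distrib)
          also have "\<dots> = - (inverse (y - 1) * (y - 1)) * inverse (2 - y)" by (simp add: algebra_simps)
          also have "\<dots> = - inverse (2 - y)" using a by simp
          also have "\<dots> = inverse (y - 2)" by (metis inverse_minus_eq minus_diff_eq)
          finally show ?thesis by (simp add: divide_inverse)
        qed
        then have I: "inverse (poly gq y) * (1 - y) = 1 / (y - 2)" .
        have "Qf (Pb n * [:1, -1:]) (2*n+1) y = (poly (Pb n) y * inverse (poly gq y)^(2*n) * exp (- inverse (poly gq y))) * (inverse (poly gq y) * (1 - y))"
          using True by (simp add: Qf_def mult_ac power_add algebra_simps)
        also have "\<dots> = Db n y * (1 / (y - 2))" unfolding I using True by (simp add: Db_def Qf_def)
        finally show ?thesis by (simp add: Db_out)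
      qed (auto simp: Db_def Qf_def)
    qed
    have "((\<lambda>y. (Db n y - Db n 2) / (y - 2)) \<longlongrightarrow> 0) (at 2)"
      using tendsto_cong[OF ev] Qf_lim2 by blast
    then show ?thesis using 4 by (simp add: has_field_derivative_iff Db_out)
  qed
qed

lemma Db_cont: "isCont (Db n) x"
  using Db_deriv DERIV_isCont by blast

lemma Db0_nonneg: "Db 0 x \<ge> 0"
  by (simp add: Db_def Qf_def)

lemma Db0_pos: "Db 0 (3/2) > 0"
  by (simp add: Db_def Qf_def)


definition fam :: "(nat \<Rightarrow> real \<Rightarrow> real) \<Rightarrow> bool" where
  "fam D \<longleftrightarrow> (\<forall>n x. x \<ge> 0 \<longrightarrow> (D n has_real_derivative D (Suc n) x) (at x within {0..}))"

lemma famD: "fam D \<Longrightarrow> x \<ge> 0 \<Longrightarrow> (D n has_real_derivative D (Suc n) x) (at x within {0..})"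
  unfolding fam_def by blast

lemma fam_Db: "fam Db"
  unfolding fam_def using Db_deriv has_field_derivative_at_within by blast

lemma fam_add: "fam A \<Longrightarrow> fam B \<Longrightarrow> fam (\<lambda>n x. A n x + B n x)"
  unfolding fam_def by (auto intro!: DERIV_add)

lemma fam_cmult: "fam A \<Longrightarrow> fam (\<lambda>n x. c * A n x)"
  unfolding fam_def by (auto intro!: DERIV_cmult)

lemma fam_shift: "fam A \<Longrightarrow> fam (\<lambda>n. A (Suc n))"
  unfolding fam_def by auto

definition FX :: "(nat \<Rightarrow> real \<Rightarrow> real) \<Rightarrow> nat \<Rightarrow> real \<Rightarrow> real" where
  "FX A n x = x * A n x + real n * A (n - 1) x"

lemma fam_X: "fam A \<Longrightarrow> fam (FX A)"
  unfolding fam_def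
proof (intro allI impI)
  fix n x assume A: "\<forall>n x. 0 \<le> x \<longrightarrow> (A n has_real_derivative A (Suc n) x) (at x within {0..})" and x: "0 \<le> (x::real)"
  have "((\<lambda>x. x * A n x + real n * A (n - 1) x) has_real_derivative
      (1 * A n x + A (Suc n) x * x) + real n * A (Suc (n - 1)) x) (at x within {0..})"
    using A x by (intro DERIV_add DERIV_mult DERIV_ident DERIV_cmult) auto
  moreover have "(1 * A n x + A (Suc n) x * x) + real n * A (Suc (n - 1)) x = FX A (Suc n) x"
    by (cases n) (auto simp: FX_def algebra_simps)
  moreover have "FX A n = (\<lambda>x. x * A n x + real n * A (n - 1) x)" by (rule ext) (simp add: FX_def)
  ultimately show "(FX A n has_real_derivative FX A (Suc n) x) (at x within {0..})"
    by (simp only:)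
qed

lemma FX0: "FX A 0 x = x * A 0 x" by (simp add: FX_def)

lemma smooth_of_fam: "fam D \<Longrightarrow> (\<And>x. x \<ge> 0 \<Longrightarrow> D 0 x = f x) \<Longrightarrow> smooth_nonneg f"
  unfolding smooth_nonneg_def fam_def by blast

lemma Db_cont_on: "continuous_on S (Db n)"
  by (intro continuous_at_imp_continuous_on ballI Db_cont)

definition Zb :: real where "Zb = (LBINT t:{0..2}. Db 0 t)"

lemma pos_int:
  fixes h :: "real \<Rightarrow> real"
  assumes c: "continuous_on {a..b} h" and nn: "\<And>x. x \<in> {a..b} \<Longrightarrow> h x \<ge> 0"
    and p: "c \<in> {a..b}" "h c > 0" and ab: "a < b"
  shows "(LBINT x:{a..b}. h x) > 0"
proof -
  have si: "set_integrable lborel {a..b} h" by (rule borel_integrable_atLeastAtMost'[OF c])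
  have e: "(LBINT x:{a..b}. h x) = integral {a..b} h" by (rule set_borel_integral_eq_integral(2)[OF si])
  have io: "h integrable_on {a..b}" by (rule integrable_continuous_interval[OF c])
  have "0 \<le> integral {a..b} h" by (rule integral_nonneg[OF io nn])
  moreover have "integral {a..b} h \<noteq> 0"
  proof
    assume "integral {a..b} h = 0"
    then have hi0: "(h has_integral 0) {a..b}" using integrable_integral[OF io] by simp
    have hi: "(h has_integral 0) (cbox a b)" using hi0 by (simp only: box_real)
    have c': "continuous_on (cbox a b) h" using c by (simp only: box_real)
    have nn': "\<And>x. x \<in> box a b \<Longrightarrow> 0 \<le> h x" using nn by (simp add: box_real)
    have ne: "box a b \<noteq> {}" using ab by (simp add: box_real)
    have pc: "c \<in> cbox a b" using p by (simp only: box_real)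
    have "h c = 0" by (rule has_integral_0_cbox_imp_0[OF c' nn' hi ne pc])
    then show False using p by simp
  qed
  ultimately show ?thesis using e by simp
qed

lemma Zb_pos: "Zb > 0"
  unfolding Zb_def by (rule pos_int[of 0 2 "Db 0" "3/2"]) (auto simp: Db_cont_on Db0_nonneg Db0_pos)

definition chi0 :: "real \<Rightarrow> real" where
  "chi0 x = (LBINT t=ereal 0..ereal x. Db 0 t) / Zb"

lemma chi0_deriv: "x \<ge> 0 \<Longrightarrow> (chi0 has_real_derivative Db 0 x / Zb) (at x)"
proof -
  assume x: "x \<ge> 0"
  have "((\<lambda>u. LBINT t=ereal 0..ereal u. Db 0 t) has_vector_derivative Db 0 x) (at x within {-1..x+1})"
    by (rule interval_integral_FTC2) (use x in \<open>auto simp: Db_cont_on\<close>)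
  moreover have "at x within {-1..x+1} = at x"
    by (rule at_within_interior) (use x in simp)
  ultimately have "((\<lambda>u. LBINT t=ereal 0..ereal u. Db 0 t) has_real_derivative Db 0 x) (at x)"
    by (simp add: has_real_derivative_iff_has_vector_derivative)
  then show ?thesis unfolding chi0_def[abs_def] by (rule DERIV_cdivide)
qed

lemma chi0_cont: "x \<ge> 0 \<Longrightarrow> isCont chi0 x"
  using chi0_deriv DERIV_isCont by blast

lemma chi0_zero: "0 \<le> x \<Longrightarrow> x \<le> 1 \<Longrightarrow> chi0 x = 0"
proof -
  assume x: "0 \<le> x" "x \<le> 1"
  have "(LBINT t=ereal 0..ereal x. Db 0 t) = (LBINT t:{0..x}. Db 0 t)" using x by (simp add: interval_integral_Icc)
  also have "\<dots> = (LBINT t:{0..x}. 0)" by (rule set_cong_int(1)) (use x in \<open>auto simp: Db_out\<close>)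
  finally show ?thesis by (simp add: chi0_def)
qed

lemma chi0_one: "x \<ge> 2 \<Longrightarrow> chi0 x = 1"
proof -
  assume x: "x \<ge> 2"
  have "(LBINT t=ereal 0..ereal x. Db 0 t) = (LBINT t:{0..x}. Db 0 t)" using x by (simp add: interval_integral_Icc)
  also have "\<dots> = (LBINT t:{0..2}. Db 0 t)"
    by (rule set_integral_shrink(1)) (use x in \<open>auto simp: Db_out\<close>)
  finally show ?thesis using Zb_pos by (simp add: chi0_def Zb_def)
qed

definition Dc :: "nat \<Rightarrow> real \<Rightarrow> real" where
  "Dc n = (case n of 0 \<Rightarrow> chi0 | Suc m \<Rightarrow> (\<lambda>x. Db m x / Zb))"

lemma fam_Dc: "fam Dc"
  unfolding fam_def
proof (intro allI impI)
  fix n and x :: real assume x: "x \<ge> 0"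
  show "(Dc n has_real_derivative Dc (Suc n) x) (at x within {0..})"
  proof (cases n)
    case 0
    then show ?thesis using chi0_deriv[OF x] has_field_derivative_at_within by (simp add: Dc_def) blast
  next
    case (Suc m)
    then show ?thesis using DERIV_cdivide[OF Db_deriv[of m x], of Zb] has_field_derivative_at_within
      by (simp add: Dc_def) blast
  qed
qed

definition q3 :: "real \<Rightarrow> real" where "q3 x = x * Db 1 x + 4 * Db 0 x"
definition q1 :: "real \<Rightarrow> real" where "q1 x = x * (x * Db 2 x) + 9 * (x * Db 1 x) + 16 * Db 0 x"

lemma q3_deriv: "(q3 has_real_derivative 5 * Db 1 x + x * Db 2 x) (at x)"
proof -
  have "(q3 has_real_derivative (1 * Db 1 x + Db 2 x * x) + 4 * Db 1 x) (at x)"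
    unfolding q3_def[abs_def] using Db_deriv[of 0 x] Db_deriv[of 1 x]
    by (intro DERIV_add DERIV_mult DERIV_ident DERIV_cmult) (auto simp: numeral_2_eq_2)
  then show ?thesis by (simp add: algebra_simps)
qed

lemma q1_eq: "q1 x = x * (5 * Db 1 x + x * Db 2 x) + 4 * q3 x"
  by (simp add: q1_def q3_def algebra_simps)

lemma q_out: "x \<le> 1 \<or> x \<ge> 2 \<Longrightarrow> q3 x = 0 \<and> q1 x = 0"
  by (simp add: q1_def q3_def Db_out)

lemma q3_cont: "isCont q3 x" unfolding q3_def by (intro continuous_intros Db_cont)
lemma q1_cont: "isCont q1 x" unfolding q1_def by (intro continuous_intros Db_cont)

lemma adj:
  assumes dU: "\<And>x. (U has_real_derivative U' x) (at x)" and cU': "continuous_on {1..2} U'"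
    and dw: "\<And>x. x \<in> {1..2} \<Longrightarrow> (w has_real_derivative w' x) (at x)" and cw': "continuous_on {1..2} w'"
    and U1: "U 1 = 0" and U2: "U 2 = 0"
  shows "(LBINT x:{1..2}. (x * U' x + 4 * U x) * w x) = (LBINT x:{1..2}. U x * (3 * w x - x * w' x))"
proof -
  have cU: "continuous_on {1..2} U"
    by (intro continuous_at_imp_continuous_on ballI) (use dU DERIV_isCont in blast)
  have cw: "continuous_on {1..2} w"
    by (intro continuous_at_imp_continuous_on ballI) (use dw DERIV_isCont in blast)
  define f where "f x = (x * U' x + 4 * U x) * w x - U x * (3 * w x - x * w' x)" for x
  have cf: "continuous_on {1..2} f" unfolding f_def by (intro continuous_intros cU cU' cw cw')
  have "(LBINT x=ereal 1..ereal 2. f x) = (\<lambda>x. x * U x * w x) 2 - (\<lambda>x. x * U x * w x) 1"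
  proof (rule interval_integral_FTC_finite)
    show "continuous_on {min 1 2..max 1 2} f" using cf by simp
    fix x :: real assume "min 1 2 \<le> x" "x \<le> max 1 2"
    then have x: "x \<in> {1..2}" by simp
    have "((\<lambda>x. x * U x * w x) has_real_derivative (1 * U x + U' x * x) * w x + w' x * (x * U x)) (at x)"
      by (intro DERIV_mult DERIV_ident dU dw x)
    moreover have "(1 * U x + U' x * x) * w x + w' x * (x * U x) = f x"
      by (simp add: f_def algebra_simps)
    ultimately show "((\<lambda>x. x * U x * w x) has_vector_derivative f x) (at x within {min 1 2..max 1 2})"
      by (simp add: has_real_derivative_iff_has_vector_derivative[symmetric] has_field_derivative_at_within)
  qed
  then have "(LBINT x:{1..2}. f x) = 0" using U1 U2 by (simp add: interval_integral_Icc)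
  moreover have "(LBINT x:{1..2}. f x) = (LBINT x:{1..2}. (x * U' x + 4 * U x) * w x) - (LBINT x:{1..2}. U x * (3 * w x - x * w' x))"
    unfolding f_def
    by (rule set_integral_diff(2); rule borel_integrable_atLeastAtMost'; intro continuous_intros cU cU' cw cw')
  ultimately show ?thesis by simp
qed


lemma Ib_zero: "(\<And>x. x \<in> {1..2} \<Longrightarrow> f x = 0) \<Longrightarrow> (LBINT x:{1..(2::real)}. f x) = 0"
proof -
  assume "\<And>x. x \<in> {1..2} \<Longrightarrow> f x = 0"
  then have "(LBINT x:{1..(2::real)}. f x) = (LBINT x:{1..(2::real)}. 0)" by (rule set_cong_int(1))
  then show ?thesis by simp
qed

lemma Ib_cong: "(\<And>x. x \<in> {1..2} \<Longrightarrow> f x = g x) \<Longrightarrow> (LBINT x:{1..(2::real)}. f x) = (LBINT x:{1..2}. g x)"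
  by (rule set_cong_int(1))

lemma d_cube: "((\<lambda>x::real. x^3) has_real_derivative 3 * x^2) (at x)"
  by (rule DERIV_cong[OF DERIV_power[OF DERIV_ident]]) simp

lemma d_cubeln: "x > 0 \<Longrightarrow> ((\<lambda>x::real. x^3 * ln x) has_real_derivative 3 * x^2 * ln x + x^2) (at x)"
  by (rule DERIV_cong[OF DERIV_mult[OF d_cube DERIV_ln]]) (simp_all add: power2_eq_square power3_eq_cube field_simps)

lemma d_icube: "x > 0 \<Longrightarrow> ((\<lambda>x::real. 1 / x^3) has_real_derivative - 3 / x^4) (at x)"
proof -
  assume x: "x > 0"
  have "((\<lambda>x::real. inverse (x^3)) has_real_derivative - (inverse (x^3) * (3 * x^2) * inverse (x^3))) (at x)"
    by (rule DERIV_inverse'[OF d_cube]) (use x in simp)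
  moreover have "- (inverse (x^3) * (3 * x^2) * inverse (x^3)) = - 3 / x^4"
    using x by (simp add: field_simps power2_eq_square power3_eq_cube eval_nat_numeral)
  ultimately show ?thesis by (simp add: divide_inverse)
qed

lemma Db0_ends: "Db n 1 = 0" "Db n 2 = 0" by (simp_all add: Db_out)
lemma q3_ends: "q3 1 = 0" "q3 2 = 0" by (simp_all add: q_out)

lemma cont_cube: "continuous_on {1..2::real} (\<lambda>x. 3 * x^2)" by (intro continuous_intros)
lemma cont_cubeln: "continuous_on {1..2::real} (\<lambda>x. 3 * x^2 * ln x + x^2)"
  by (intro continuous_intros) auto
lemma cont_icube: "continuous_on {1..2::real} (\<lambda>x. - 3 / x^4)"
  by (intro continuous_intros) auto

lemma cont_Db1: "continuous_on S (Db 1)" by (rule Db_cont_on)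
lemma cont_dq3: "continuous_on S (\<lambda>x. 5 * Db 1 x + x * Db 2 x)" by (intro continuous_intros Db_cont_on)

lemma V1: "(LBINT x:{1..2}. q3 x * x^3) = 0"
proof -
  have "(LBINT x:{1..2}. (x * Db 1 x + 4 * Db 0 x) * x^3) = (LBINT x:{1..2}. Db 0 x * (3 * x^3 - x * (3 * x^2)))"
    by (rule adj[where U="Db 0" and U'="Db 1"]) (rule Db_deriv cont_Db1 d_cube cont_cube | simp add: Db0_ends)+
  also have "\<dots> = 0" by (rule Ib_zero) (simp add: power2_eq_square power3_eq_cube)
  finally show ?thesis by (simp add: q3_def)
qed

lemma V2: "(LBINT x:{1..2}. q3 x * (x^3 * ln x)) = - (LBINT x:{1..2}. Db 0 x * x^3)"
proof -
  have "(LBINT x:{1..2}. (x * Db 1 x + 4 * Db 0 x) * (x^3 * ln x)) = (LBINT x:{1..2}. Db 0 x * (3 * (x^3 * ln x) - x * (3 * x^2 * ln x + x^2)))"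
    by (rule adj[where U="Db 0" and U'="Db 1"]) (rule Db_deriv cont_Db1 cont_cubeln | (rule d_cubeln, simp) | simp add: Db0_ends)+
  also have "\<dots> = (LBINT x:{1..2}. (-1) * (Db 0 x * x^3))"
    by (rule Ib_cong) (simp add: power2_eq_square power3_eq_cube algebra_simps)
  also have "\<dots> = - (LBINT x:{1..2}. Db 0 x * x^3)" by (subst set_integral_mult_right) simp
  finally show ?thesis by (simp add: q3_def)
qed

lemma V3: "(LBINT x:{1..2}. q1 x * x^3) = 0"
proof -
  have "(LBINT x:{1..2}. (x * (5 * Db 1 x + x * Db 2 x) + 4 * q3 x) * x^3) = (LBINT x:{1..2}. q3 x * (3 * x^3 - x * (3 * x^2)))"
    by (rule adj[where U="q3" and U'="\<lambda>x. 5 * Db 1 x + x * Db 2 x"]) (rule q3_deriv cont_dq3 d_cube cont_cube | simp add: q3_ends)+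
  also have "\<dots> = 0" by (rule Ib_zero) (simp add: power2_eq_square power3_eq_cube)
  finally show ?thesis by (simp add: q1_eq)
qed

lemma V4: "(LBINT x:{1..2}. q1 x * (x^3 * ln x)) = 0"
proof -
  have "(LBINT x:{1..2}. (x * (5 * Db 1 x + x * Db 2 x) + 4 * q3 x) * (x^3 * ln x)) = (LBINT x:{1..2}. q3 x * (3 * (x^3 * ln x) - x * (3 * x^2 * ln x + x^2)))"
    by (rule adj[where U="q3" and U'="\<lambda>x. 5 * Db 1 x + x * Db 2 x"]) (rule q3_deriv cont_dq3 cont_cubeln | (rule d_cubeln, simp) | simp add: q3_ends)+
  also have "\<dots> = (LBINT x:{1..2}. (-1) * (q3 x * x^3))"
    by (rule Ib_cong) (simp add: power2_eq_square power3_eq_cube algebra_simps)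
  also have "\<dots> = 0" using V1 by (subst set_integral_mult_right) simp
  finally show ?thesis by (simp add: q1_eq)
qed

lemma V5a: "(LBINT x:{1..2}. q3 x / x^3) = 6 * (LBINT x:{1..2}. Db 0 x / x^3)"
proof -
  have "(LBINT x:{1..2}. (x * Db 1 x + 4 * Db 0 x) * (1 / x^3)) = (LBINT x:{1..2}. Db 0 x * (3 * (1 / x^3) - x * (- 3 / x^4)))"
    by (rule adj[where U="Db 0" and U'="Db 1"]) (rule Db_deriv cont_Db1 cont_icube | (rule d_icube, simp) | simp add: Db0_ends)+
  also have "\<dots> = (LBINT x:{1..2}. 6 * (Db 0 x / x^3))"
    by (rule Ib_cong) (auto simp: field_simps eval_nat_numeral)
  also have "\<dots> = 6 * (LBINT x:{1..2}. Db 0 x / x^3)" by (rule set_integral_mult_right)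
  finally show ?thesis by (simp add: q3_def)
qed

lemma V5: "(LBINT x:{1..2}. q1 x / x^3) = 36 * (LBINT x:{1..2}. Db 0 x / x^3)"
proof -
  have "(LBINT x:{1..2}. (x * (5 * Db 1 x + x * Db 2 x) + 4 * q3 x) * (1 / x^3)) = (LBINT x:{1..2}. q3 x * (3 * (1 / x^3) - x * (- 3 / x^4)))"
    by (rule adj[where U="q3" and U'="\<lambda>x. 5 * Db 1 x + x * Db 2 x"]) (rule q3_deriv cont_dq3 cont_icube | (rule d_icube, simp) | simp add: q3_ends)+
  also have "\<dots> = (LBINT x:{1..2}. 6 * (q3 x / x^3))"
    by (rule Ib_cong) (auto simp: field_simps eval_nat_numeral)
  also have "\<dots> = 6 * (LBINT x:{1..2}. q3 x / x^3)" by (rule set_integral_mult_right)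
  finally show ?thesis using V5a by (simp add: q1_eq)
qed

lemma alpha_pos: "(LBINT x:{1..2}. Db 0 x * x^3) > 0"
  by (rule pos_int[of 1 2 _ "3/2"]) (auto intro!: continuous_intros Db_cont_on mult_nonneg_nonneg mult_pos_pos Db0_nonneg Db0_pos)

lemma beta_pos: "(LBINT x:{1..2}. Db 0 x / x^3) > 0"
  by (rule pos_int[of 1 2 _ "3/2"]) (auto intro!: continuous_intros Db_cont_on divide_nonneg_pos divide_pos_pos Db0_nonneg Db0_pos)


lemma supp12:
  fixes f :: "real \<Rightarrow> real"
  assumes c: "continuous_on {1..2} f" and z: "\<And>x. x > 0 \<Longrightarrow> x < 1 \<or> x > 2 \<Longrightarrow> f x = 0"
  shows "set_integrable lborel {0<..} f" "(LBINT x:{0<..}. f x) = (LBINT x:{1..2}. f x)"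
proof -
  have sub: "{1..2} \<subseteq> ({0<..} :: real set)" by auto
  have zz: "\<And>x. x \<in> {0<..} - {1..2} \<Longrightarrow> f x = 0" using z by force
  show "(LBINT x:{0<..}. f x) = (LBINT x:{1..2}. f x)" by (rule set_integral_shrink(1)[OF sub zz])
  show "set_integrable lborel {0<..} f"
    using set_integral_shrink(2)[OF sub zz] borel_integrable_atLeastAtMost'[OF c] by simp
qed

lemma int_lemma3:
  fixes f :: "real \<Rightarrow> real"
  assumes cont: "continuous_on {0<..} f" and z: "\<And>x. x \<ge> 2 \<Longrightarrow> f x = 0"
    and b: "\<And>x. 0 < x \<Longrightarrow> x < 2 \<Longrightarrow> \<bar>f x\<bar> \<le> B"
  shows "set_integrable lborel {0<..} f"
proof -
  have "set_integrable lborel {0..2::real} (\<lambda>_. B)"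
    by (rule borel_integrable_atLeastAtMost') (rule continuous_on_const)
  then have i: "integrable lborel (\<lambda>x::real. indicator {0..2} x *\<^sub>R B)" unfolding set_integrable_def .
  have m: "(\<lambda>x. indicator {0<..} x *\<^sub>R f x) \<in> borel_measurable lborel"
    using borel_measurable_continuous_on_indicator[OF _ cont] by simp
  show ?thesis unfolding set_integrable_def
  proof (rule Bochner_Integration.integrable_bound[OF i m], rule AE_I2)
    fix x :: real
    show "norm (indicator {0<..} x *\<^sub>R f x) \<le> norm (indicator {0..2} x *\<^sub>R B)"
    proof (cases "0 < x \<and> x < 2")
      case True
      then have "\<bar>f x\<bar> \<le> B" using b by simp
      then show ?thesis using True by (simp add: indicator_def)
    next
      case False
      then have "x \<le> 0 \<or> x \<ge> 2" by auto
      then show ?thesis using z by (auto simp: indicator_def)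
    qed
  qed
qed

lemma cubeln_bnd: assumes "0 < x" "x < 2" shows "\<bar>x^3 * ln x\<bar> \<le> (8::real)"
proof (cases "x < 1")
  case True
  have l: "ln (1/x) \<le> 1/x - 1" using assms by (intro ln_le_minus_one) simp
  have "ln (1/x) = - ln x" using assms by (simp add: ln_div)
  then have l2: "- ln x \<le> 1/x" using l by simp
  have "ln x \<le> 0" using True assms by simp
  then have "\<bar>x^3 * ln x\<bar> = x^3 * (- ln x)" using assms by (simp add: abs_mult)
  also have "\<dots> \<le> x^3 * (1/x)" using l2 assms by (intro mult_left_mono) auto
  also have "\<dots> = x^2" using assms by (simp add: power2_eq_square power3_eq_cube)
  also have "\<dots> \<le> 1" using True assms by (simp add: power_le_one)
  finally show ?thesis by simp
next
  case False
  have "ln x \<le> x - 1" using assms by (intro ln_le_minus_one) simp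
  then have l: "ln x \<le> 1" using assms by simp
  have l0: "ln x \<ge> 0" using False by simp
  have "x^3 \<le> 2^3" using assms by (intro power_mono) auto
  then have "x^3 * ln x \<le> 8 * 1" using l l0 by (intro mult_mono) auto
  then show ?thesis using l0 assms by (simp add: abs_mult)
qed

lemma chi0_bnd: "\<exists>M\<ge>0. \<forall>x\<ge>0. \<bar>chi0 x\<bar> \<le> M"
proof -
  have "continuous_on {0..2} chi0" by (intro continuous_at_imp_continuous_on ballI chi0_cont) auto
  then obtain B where B: "B \<ge> 0" "\<forall>x\<in>{0..2}. \<bar>chi0 x\<bar> \<le> B" using cont_bound by blast
  show ?thesis
  proof (intro exI[of _ "max B 1"] conjI allI impI)
    fix x :: real assume x: "x \<ge> 0"
    show "\<bar>chi0 x\<bar> \<le> max B 1"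
    proof (cases "x \<le> 2")
      case True then have "\<bar>chi0 x\<bar> \<le> B" using B x by auto
      then show ?thesis by simp
    next
      case False then show ?thesis using chi0_one[of x] by simp
    qed
  qed simp
qed

lemma chi0_cont_on: "continuous_on {0<..} chi0"
  by (intro continuous_at_imp_continuous_on ballI chi0_cont) auto

lemma K1_int: "set_integrable lborel {0<..} (\<lambda>x. chi0 x / x^3)"
proof -
  obtain M where M: "M \<ge> 0" "\<forall>x\<ge>0. \<bar>chi0 x\<bar> \<le> M" using chi0_bnd by blast
  show ?thesis
  proof (rule int_lemma[where C=M])
    show "continuous_on {0<..} (\<lambda>x. chi0 x / x ^ 3)"
      by (intro continuous_intros chi0_cont_on) auto
    show "\<And>r. 0 < r \<Longrightarrow> r < 1 \<Longrightarrow> chi0 r / r ^ 3 = 0" using chi0_zero by simp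
    fix r :: real assume r: "r \<ge> 1"
    have "\<bar>chi0 r / r^3\<bar> = \<bar>chi0 r\<bar> / r^3" using r by (simp add: abs_divide)
    also have "\<dots> \<le> M / r^3" using M r by (intro divide_right_mono) auto
    also have "\<dots> \<le> M / r^2" using M r by (intro divide_left_mono power_increasing) auto
    finally show "\<bar>chi0 r / r ^ 3\<bar> \<le> M / r^2" .
  qed
qed

lemma K2_int: "set_integrable lborel {0<..} (\<lambda>x. x^3 * (1 - chi0 x))"
proof -
  obtain M where M: "M \<ge> 0" "\<forall>x\<ge>0. \<bar>chi0 x\<bar> \<le> M" using chi0_bnd by blast
  show ?thesis
  proof (rule int_lemma3[where B="8 * (1 + M)"])
    show "continuous_on {0<..} (\<lambda>x. x^3 * (1 - chi0 x))" by (intro continuous_intros chi0_cont_on)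
    show "\<And>x. 2 \<le> x \<Longrightarrow> x ^ 3 * (1 - chi0 x) = 0" using chi0_one by simp
    fix x :: real assume x: "0 < x" "x < 2"
    have "x^3 \<le> 2^3" using x by (intro power_mono) auto
    moreover have "\<bar>1 - chi0 x\<bar> \<le> 1 + M"
    proof -
      have "\<bar>1 - chi0 x\<bar> \<le> \<bar>1\<bar> + \<bar>chi0 x\<bar>" by (rule abs_triangle_ineq4)
      moreover have "\<bar>chi0 x\<bar> \<le> M" using M x by simp
      ultimately show ?thesis by simp
    qed
    ultimately have "\<bar>x^3\<bar> * \<bar>1 - chi0 x\<bar> \<le> 8 * (1 + M)" using x by (intro mult_mono) auto
    then show "\<bar>x ^ 3 * (1 - chi0 x)\<bar> \<le> 8 * (1 + M)" by (simp add: abs_mult)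
  qed
qed

lemma K3_int: "set_integrable lborel {0<..} (\<lambda>x. x^3 * ln x * (1 - chi0 x))"
proof -
  obtain M where M: "M \<ge> 0" "\<forall>x\<ge>0. \<bar>chi0 x\<bar> \<le> M" using chi0_bnd by blast
  show ?thesis
  proof (rule int_lemma3[where B="8 * (1 + M)"])
    show "continuous_on {0<..} (\<lambda>x. x^3 * ln x * (1 - chi0 x))"
      by (intro continuous_intros chi0_cont_on) auto
    show "\<And>x. 2 \<le> x \<Longrightarrow> x ^ 3 * ln x * (1 - chi0 x) = 0" using chi0_one by simp
    fix x :: real assume x: "0 < x" "x < 2"
    have "\<bar>x^3 * ln x\<bar> \<le> 8" by (rule cubeln_bnd[OF x])
    moreover have "\<bar>1 - chi0 x\<bar> \<le> 1 + M"
    proof -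
      have "\<bar>1 - chi0 x\<bar> \<le> \<bar>1\<bar> + \<bar>chi0 x\<bar>" by (rule abs_triangle_ineq4)
      moreover have "\<bar>chi0 x\<bar> \<le> M" using M x by simp
      ultimately show ?thesis by simp
    qed
    ultimately have "\<bar>x^3 * ln x\<bar> * \<bar>1 - chi0 x\<bar> \<le> 8 * (1 + M)" by (intro mult_mono) auto
    then show "\<bar>x ^ 3 * ln x * (1 - chi0 x)\<bar> \<le> 8 * (1 + M)" by (simp add: abs_mult)
  qed
qed

lemma lin4:
  fixes f0 f1 f2 f3 :: "real \<Rightarrow> real"
  assumes "set_integrable M A f0" "set_integrable M A f1" "set_integrable M A f2" "set_integrable M A f3"
  shows "set_integrable M A (\<lambda>x. f0 x + c1 * f1 x + c2 * f2 x + c3 * f3 x)"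
    "(LINT x:A|M. f0 x + c1 * f1 x + c2 * f2 x + c3 * f3 x)
      = (LINT x:A|M. f0 x) + c1 * (LINT x:A|M. f1 x) + c2 * (LINT x:A|M. f2 x) + c3 * (LINT x:A|M. f3 x)"
proof -
  have i1: "set_integrable M A (\<lambda>x. c1 * f1 x)" using assms(2) by (rule set_integrable_mult_right)
  have i2: "set_integrable M A (\<lambda>x. c2 * f2 x)" using assms(3) by (rule set_integrable_mult_right)
  have i3: "set_integrable M A (\<lambda>x. c3 * f3 x)" using assms(4) by (rule set_integrable_mult_right)
  have j1: "set_integrable M A (\<lambda>x. f0 x + c1 * f1 x)" by (rule set_integral_add(1)[OF assms(1) i1])
  have j2: "set_integrable M A (\<lambda>x. f0 x + c1 * f1 x + c2 * f2 x)" by (rule set_integral_add(1)[OF j1 i2])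
  show "set_integrable M A (\<lambda>x. f0 x + c1 * f1 x + c2 * f2 x + c3 * f3 x)" by (rule set_integral_add(1)[OF j2 i3])
  show "(LINT x:A|M. f0 x + c1 * f1 x + c2 * f2 x + c3 * f3 x)
      = (LINT x:A|M. f0 x) + c1 * (LINT x:A|M. f1 x) + c2 * (LINT x:A|M. f2 x) + c3 * (LINT x:A|M. f3 x)"
    using set_integral_add(2)[OF j2 i3] set_integral_add(2)[OF j1 i2] set_integral_add(2)[OF assms(1) i1]
    by simp
qed


lemma q1_cont_on: "continuous_on S q1" by (intro continuous_at_imp_continuous_on ballI q1_cont)
lemma q3_cont_on: "continuous_on S q3" by (intro continuous_at_imp_continuous_on ballI q3_cont)

lemma zero_out: "x < 1 \<or> x > 2 \<Longrightarrow> q1 x = 0 \<and> q3 x = 0 \<and> Db 0 x = 0"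
  using q_out[of x] Db_out[of x 0] by auto

lemma exists_good: "\<exists>chi. good_cutoff chi"
proof -
  define \<alpha> where "\<alpha> = (LBINT x:{1..2}. Db 0 x * x^3)"
  define \<beta> where "\<beta> = (LBINT x:{1..2}. Db 0 x / x^3)"
  define \<gamma> where "\<gamma> = (LBINT x:{1..2}. q3 x / x^3)"
  define \<delta> where "\<delta> = (LBINT x:{1..2}. Db 0 x * (x^3 * ln x))"
  define K1 where "K1 = (LBINT x:{0<..}. chi0 x / x^3)"
  define K2 where "K2 = (LBINT x:{0<..}. x^3 * (1 - chi0 x))"
  define K3 where "K3 = (LBINT x:{0<..}. x^3 * ln x * (1 - chi0 x))"
  have ap: "\<alpha> > 0" unfolding \<alpha>_def by (rule alpha_pos)
  have bp: "\<beta> > 0" unfolding \<beta>_def by (rule beta_pos)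
  define a2 where "a2 = K2 / \<alpha>"
  define a3 where "a3 = (a2 * \<delta> - K3) / \<alpha>"
  define a1 where "a1 = - (K1 + a2 * \<beta> + a3 * \<gamma>) / (36 * \<beta>)"
  define chi where "chi x = chi0 x + a1 * q1 x + a2 * Db 0 x + a3 * q3 x" for x
  define F3 where "F3 n x = FX (\<lambda>k. Db (Suc k)) n x + 4 * Db n x" for n x
  define F1 where "F1 n x = FX (FX (\<lambda>k. Db (Suc (Suc k)))) n x + 9 * FX (\<lambda>k. Db (Suc k)) n x + 16 * Db n x" for n x
  define Dchi where "Dchi n x = Dc n x + a1 * F1 n x + a2 * Db n x + a3 * F3 n x" for n x
  have fX1: "fam (FX (\<lambda>k. Db (Suc k)))" by (rule fam_X[OF fam_shift[OF fam_Db]])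
  have fX2: "fam (FX (FX (\<lambda>k. Db (Suc (Suc k)))))"
    by (rule fam_X[OF fam_X[OF fam_shift[OF fam_shift[OF fam_Db]]]])
  have fam: "fam Dchi" unfolding fam_def
  proof (intro allI impI)
    fix n and x :: real assume x: "x \<ge> 0"
    note d = famD[OF fam_Dc x] famD[OF fam_Db x] famD[OF fX1 x] famD[OF fX2 x]
    show "(Dchi n has_real_derivative Dchi (Suc n) x) (at x within {0..})"
      unfolding Dchi_def[abs_def] F1_def F3_def
      by (intro DERIV_add DERIV_cmult d)
  qed
  have D0: "Dchi 0 x = chi x" if "x \<ge> 0" for x
    by (simp add: Dchi_def chi_def Dc_def F1_def F3_def FX0 q1_def q3_def numeral_2_eq_2)
  have smooth: "smooth_nonneg chi" by (rule smooth_of_fam[OF fam D0])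
  have z: "chi x = 0" if "0 \<le> x" "x \<le> 1" for x
    using that by (simp add: chi_def chi0_zero q_out Db_out)
  have o: "chi x = 1" if "x \<ge> 2" for x
    using that by (simp add: chi_def chi0_one q_out Db_out)
  have s1c: "continuous_on {1..2} (\<lambda>x. q1 x / x^3)" by (auto intro!: continuous_intros q1_cont_on)
  have s1z: "\<And>x. x > 0 \<Longrightarrow> x < 1 \<or> x > 2 \<Longrightarrow> q1 x / x^3 = 0" by (simp add: zero_out)
  note s1 = supp12[OF s1c s1z]
  have s2c: "continuous_on {1..2} (\<lambda>x. Db 0 x / x^3)" by (auto intro!: continuous_intros Db_cont_on)
  have s2z: "\<And>x. x > 0 \<Longrightarrow> x < 1 \<or> x > 2 \<Longrightarrow> Db 0 x / x^3 = 0" by (simp add: zero_out)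
  note s2 = supp12[OF s2c s2z]
  have s3c: "continuous_on {1..2} (\<lambda>x. q3 x / x^3)" by (auto intro!: continuous_intros q3_cont_on)
  have s3z: "\<And>x. x > 0 \<Longrightarrow> x < 1 \<or> x > 2 \<Longrightarrow> q3 x / x^3 = 0" by (simp add: zero_out)
  note s3 = supp12[OF s3c s3z]
  have t1c: "continuous_on {1..2} (\<lambda>x. q1 x * x^3)" by (auto intro!: continuous_intros q1_cont_on)
  have t1z: "\<And>x. x > 0 \<Longrightarrow> x < 1 \<or> x > 2 \<Longrightarrow> q1 x * x^3 = 0" by (simp add: zero_out)
  note t1 = supp12[OF t1c t1z]
  have t2c: "continuous_on {1..2} (\<lambda>x. Db 0 x * x^3)" by (auto intro!: continuous_intros Db_cont_on)
  have t2z: "\<And>x. x > 0 \<Longrightarrow> x < 1 \<or> x > 2 \<Longrightarrow> Db 0 x * x^3 = 0" by (simp add: zero_out)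
  note t2 = supp12[OF t2c t2z]
  have t3c: "continuous_on {1..2} (\<lambda>x. q3 x * x^3)" by (auto intro!: continuous_intros q3_cont_on)
  have t3z: "\<And>x. x > 0 \<Longrightarrow> x < 1 \<or> x > 2 \<Longrightarrow> q3 x * x^3 = 0" by (simp add: zero_out)
  note t3 = supp12[OF t3c t3z]
  have u1c: "continuous_on {1..2} (\<lambda>x. q1 x * (x^3 * ln x))" by (auto intro!: continuous_intros q1_cont_on)
  have u1z: "\<And>x. x > 0 \<Longrightarrow> x < 1 \<or> x > 2 \<Longrightarrow> q1 x * (x^3 * ln x) = 0" by (simp add: zero_out)
  note u1 = supp12[OF u1c u1z]
  have u2c: "continuous_on {1..2} (\<lambda>x. Db 0 x * (x^3 * ln x))" by (auto intro!: continuous_intros Db_cont_on)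
  have u2z: "\<And>x. x > 0 \<Longrightarrow> x < 1 \<or> x > 2 \<Longrightarrow> Db 0 x * (x^3 * ln x) = 0" by (simp add: zero_out)
  note u2 = supp12[OF u2c u2z]
  have u3c: "continuous_on {1..2} (\<lambda>x. q3 x * (x^3 * ln x))" by (auto intro!: continuous_intros q3_cont_on)
  have u3z: "\<And>x. x > 0 \<Longrightarrow> x < 1 \<or> x > 2 \<Longrightarrow> q3 x * (x^3 * ln x) = 0" by (simp add: zero_out)
  note u3 = supp12[OF u3c u3z]
  have e1: "\<And>x. x \<in> {0<..} \<Longrightarrow> chi x / x^3 = chi0 x / x^3 + a1 * (q1 x / x^3) + a2 * (Db 0 x / x^3) + a3 * (q3 x / x^3)"
    by (simp add: chi_def add_divide_distrib)
  note L1 = lin4[OF K1_int s1(1) s2(1) s3(1), of a1 a2 a3]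
  have c1i: "set_integrable lborel {0<..} (\<lambda>x. chi x / x^3)"
    using set_cong_int(2)[of "{0<..}" "\<lambda>x. chi x / x^3", OF e1] L1(1) by blast
  have c1v: "(LBINT x:{0<..}. chi x / x^3) = 0"
  proof -
    have "(LBINT x:{0<..}. chi x / x^3) = K1 + a1 * (36 * \<beta>) + a2 * \<beta> + a3 * \<gamma>"
      using set_cong_int(1)[of "{0<..}" "\<lambda>x. chi x / x^3", OF e1] L1(2) s1(2) s2(2) s3(2) V5
      by (simp add: K1_def \<beta>_def \<gamma>_def)
    also have "\<dots> = 0" using bp by (simp add: a1_def field_simps)
    finally show ?thesis .
  qed
  have e2: "\<And>x. x \<in> {0<..} \<Longrightarrow> x^3 * (1 - chi x) = x^3 * (1 - chi0 x) + (-a1) * (q1 x * x^3) + (-a2) * (Db 0 x * x^3) + (-a3) * (q3 x * x^3)"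
    by (simp add: chi_def algebra_simps)
  note L2 = lin4[OF K2_int t1(1) t2(1) t3(1), of "-a1" "-a2" "-a3"]
  have c2i: "set_integrable lborel {0<..} (\<lambda>x. x^3 * (1 - chi x))"
    using set_cong_int(2)[of "{0<..}" "\<lambda>x. x^3 * (1 - chi x)", OF e2] L2(1) by blast
  have c2v: "(LBINT x:{0<..}. x^3 * (1 - chi x)) = 0"
  proof -
    have "(LBINT x:{0<..}. x^3 * (1 - chi x)) = K2 + (-a1) * 0 + (-a2) * \<alpha> + (-a3) * 0"
      using set_cong_int(1)[of "{0<..}" "\<lambda>x. x^3 * (1 - chi x)", OF e2] L2(2) t1(2) t2(2) t3(2) V1 V3
      by (simp add: K2_def \<alpha>_def)
    also have "\<dots> = 0" using ap by (simp add: a2_def)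
    finally show ?thesis .
  qed
  have e3: "\<And>x. x \<in> {0<..} \<Longrightarrow> x^3 * ln x * (1 - chi x) = x^3 * ln x * (1 - chi0 x) + (-a1) * (q1 x * (x^3 * ln x)) + (-a2) * (Db 0 x * (x^3 * ln x)) + (-a3) * (q3 x * (x^3 * ln x))"
    by (simp add: chi_def algebra_simps)
  note L3 = lin4[OF K3_int u1(1) u2(1) u3(1), of "-a1" "-a2" "-a3"]
  have c3i: "set_integrable lborel {0<..} (\<lambda>x. x^3 * ln x * (1 - chi x))"
    using set_cong_int(2)[of "{0<..}" "\<lambda>x. x^3 * ln x * (1 - chi x)", OF e3] L3(1) by blast
  have c3v: "(LBINT x:{0<..}. x^3 * ln x * (1 - chi x)) = 0"
  proof -
    have "(LBINT x:{0<..}. x^3 * ln x * (1 - chi x)) = K3 + (-a1) * 0 + (-a2) * \<delta> + (-a3) * (- \<alpha>)"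
      using set_cong_int(1)[of "{0<..}" "\<lambda>x. x^3 * ln x * (1 - chi x)", OF e3] L3(2) u1(2) u2(2) u3(2) V2 V4
      by (simp add: K3_def \<alpha>_def \<delta>_def)
    also have "\<dots> = 0" using ap by (simp add: a3_def field_simps)
    finally show ?thesis .
  qed
  have "good_cutoff chi"
    unfolding good_cutoff_def using smooth z o c1i c1v c2i c2v c3i c3v by blast
  then show ?thesis by blast
qed

theorem lemma4p28:
  shows "(\<exists>chi. good_cutoff chi) \<and>
    (\<forall>chi. good_cutoff chi \<longrightarrow>
      (\<exists>C>0. \<forall>\<eta>. 0 < \<eta> \<and> \<eta> < 1 \<longrightarrow>
          \<bar>hankel1 (\<lambda>x. chi x / x ^ 5) \<eta>\<bar> \<le> C * \<eta> ^ 3 * jbr (ln \<eta>)) \<and>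
      (\<forall>k::real. k \<ge> 0 \<longrightarrow> (\<exists>Ck>0. \<forall>\<eta>\<ge>1.
          \<bar>hankel1 (\<lambda>x. chi x / x ^ 5) \<eta>\<bar> \<le> Ck / \<eta> powr k)))"
proof (intro conjI allI impI)
  show "\<exists>chi. good_cutoff chi" by (rule exists_good)
next
  fix chi assume g: "good_cutoff chi"
  then obtain D where D: "\<forall>x\<ge>0. D 0 x = chi x" "\<forall>n. \<forall>x\<ge>0. (D n has_real_derivative D (Suc n) x) (at x within {0..})"
    unfolding good_cutoff_def smooth_nonneg_def by blast
  interpret cutoff chi D
    by unfold_locales (use D g in \<open>auto simp: good_cutoff_def\<close>)
  show "\<exists>C>0. \<forall>\<eta>. 0 < \<eta> \<and> \<eta> < 1 \<longrightarrow> \<bar>hankel1 (\<lambda>x. chi x / x ^ 5) \<eta>\<bar> \<le> C * \<eta> ^ 3 * jbr (ln \<eta>)"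
    by (rule small_bound) (use g in \<open>auto simp: good_cutoff_def\<close>)
  fix k :: real assume "k \<ge> 0"
  then show "\<exists>Ck>0. \<forall>\<eta>\<ge>1. \<bar>hankel1 (\<lambda>x. chi x / x ^ 5) \<eta>\<bar> \<le> Ck / \<eta> powr k"
    by (rule large_bound_k)
qed


end
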